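(* Let $\mathcal{W}$ be a finite vocabulary, $\mathbf{P}$ a probability vector on $\mathcal{W}$, and $\Delta=1-\max_w P_w$. There is a constant $c\in(0,1)$ such that whenever $\Delta\le c$: (1) $\mathbb{E}_{1,\mathbf{P}}h_{\mathrm{ars}}(Y)-\mathbb{E}_0h_{\mathrm{ars}}(Y)$ lies between positive constant multiples of $\mathrm{Ent}(\mathbf{P})$, and $\mathrm{Ent}(\mathbf{P})$ lies between positive constant multiples of $\Delta\log\frac1\Delta$; (2) $\mathbb{E}_{1,\mathbf{P}}h_{\log}(Y)-\mathbb{E}_0h_{\log}(Y)=1-\sum_w P_w^2$, which lies between positive constant multiples of $\Delta$; (3) for $\delta\in(0,1)$, $\mathbb{E}_{1,\mathbf{P}}h_{\mathrm{ind},\delta}(Y)-\mathbb{E}_0h_{\mathrm{ind},\delta}(Y)=\delta-F_{1,\mathbf{P}}(\delta)$, which lies between positive constant multiples of $\Delta$; (4) for $\Delta_0\in(0,1)$, $\mathbb{E}_{1,\mathbf{P}}h_{\mathrm{opt},\Delta_0}(Y)-\mathbb{E}_0h_{\mathrm{opt},\Delta_0}(Y)$ lies between positive constant multiples of $\Delta$. Here the constants depend only on $c$, and additionally on $\log|\mathcal{W}|$ in (1), on $\delta$ in (3), and on $\Delta_0$ in (4).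
   Context: $\mu_0=U(0,1)$ and $\mathbb{E}_0$ is expectation for $Y\sim\mu_0$; $\mu_{1,\mathbf{P}}$ is the distribution on $[0,1]$ with CDF $F_{1,\mathbf{P}}(r)=\sum_w P_w r^{1/P_w}$ and density $f_{1,\mathbf{P}}(r)=\sum_{w:P_w>0}r^{1/P_w-1}$, and $\mathbb{E}_{1,\mathbf{P}}$ is expectation for $Y\sim\mu_{1,\mathbf{P}}$. $\mathrm{Ent}(\mathbf{P})=-\sum_wP_w\log P_w$. Score functions on $[0,1]$: $h_{\mathrm{ars}}(y)=-\log(1-y)$; $h_{\log}(y)=\log y$; $h_{\mathrm{ind},\delta}(y)=\mathbf{1}\{y\ge\delta\}$; $h_{\mathrm{opt},\Delta_0}(y)=\log f_{1,\mathbf{P}^\star_{\Delta_0}}(y)$, where $\mathbf{P}^\star_{\Delta_0}=(1-\Delta_0,\dots,1-\Delta_0,\,1-(1-\Delta_0)\lfloor\frac{1}{1-\Delta_0}\rfloor,0,\dots)$ with $1-\Delta_0$ repeated $\lfloor\frac1{1-\Delta_0}\rfloor$ times (for $\Delta_0<1/2$ this gives $h_{\mathrm{opt},\Delta_0}(y)=\log(y^{\Delta_0/(1-\Delta_0)}+y^{1/\Delta_0-1})$). *)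

theory Defs
  imports "HOL-Probability.Probability"
begin

definition prob_vec :: "nat set \<Rightarrow> (nat \<Rightarrow> real) \<Rightarrow> bool" where
  "prob_vec W P \<longleftrightarrow> finite W \<and> W \<noteq> {} \<and> (\<forall>w\<in>W. 0 \<le> P w) \<and> (\<Sum>w\<in>W. P w) = 1"

definition Delta :: "nat set \<Rightarrow> (nat \<Rightarrow> real) \<Rightarrow> real" where
  "Delta W P = 1 - Max (P ` W)"

definition Ent :: "nat set \<Rightarrow> (nat \<Rightarrow> real) \<Rightarrow> real" where
  "Ent W P = - (\<Sum>w\<in>W. P w * ln (P w))"

definition F1 :: "nat set \<Rightarrow> (nat \<Rightarrow> real) \<Rightarrow> real \<Rightarrow> real" where
  "F1 W P r = (\<Sum>w\<in>W. P w * r powr (1 / P w))"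

definition f1 :: "nat set \<Rightarrow> (nat \<Rightarrow> real) \<Rightarrow> real \<Rightarrow> real" where
  "f1 W P r = (\<Sum>w\<in>{w\<in>W. P w > 0}. r powr (1 / P w - 1))"

definition mu0 :: "real measure" where
  "mu0 = density lborel (\<lambda>y. ennreal (indicator {0..1} y))"

definition mu1 :: "nat set \<Rightarrow> (nat \<Rightarrow> real) \<Rightarrow> real measure" where
  "mu1 W P = density lborel (\<lambda>y. ennreal (indicator {0..1} y * f1 W P y))"

definition E0 :: "(real \<Rightarrow> real) \<Rightarrow> real" where
  "E0 h = integral\<^sup>L mu0 h"

definition E1 :: "nat set \<Rightarrow> (nat \<Rightarrow> real) \<Rightarrow> (real \<Rightarrow> real) \<Rightarrow> real" where
  "E1 W P h = integral\<^sup>L (mu1 W P) h"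

definition h_ars :: "real \<Rightarrow> real" where
  "h_ars y = - ln (1 - y)"

definition h_log :: "real \<Rightarrow> real" where
  "h_log y = ln y"

definition h_ind :: "real \<Rightarrow> real \<Rightarrow> real" where
  "h_ind \<delta> y = (if y \<ge> \<delta> then 1 else 0)"

definition Pstar :: "real \<Rightarrow> nat \<Rightarrow> real" where
  "Pstar D0 i = (let k = nat \<lfloor>1 / (1 - D0)\<rfloor> in
     if i < k then 1 - D0 else if i = k then 1 - (1 - D0) * real k else 0)"

definition h_opt :: "real \<Rightarrow> real \<Rightarrow> real" where
  "h_opt D0 y = ln (f1 {0..nat \<lfloor>1 / (1 - D0)\<rfloor>} (Pstar D0) y)"

end

theory Submission
  imports Defs
begin

lemma E0_eq:
  assumes [measurable]: "g \<in> borel_measurable borel"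
  shows "E0 g = (LBINT x:{0<..<1}. g x)"
proof -
  have "E0 g = integral\<^sup>L lborel (\<lambda>x. indicator {0..1} x *\<^sub>R g x)"
    unfolding E0_def mu0_def
    by (rule integral_density) auto
  also have "\<dots> = (LBINT x:{0..1}. g x)" by (simp add: set_lebesgue_integral_def)
  also have "\<dots> = (LBINT x:{0<..<1}. g x)"
    by (rule set_integral_discrete_difference[where X="{0,1}"]) auto
  finally show ?thesis .
qed

lemma sint_bound:
  fixes f h :: "real \<Rightarrow> real"
  assumes "set_integrable lborel {0<..<1} f" "h \<in> borel_measurable borel"
    "\<And>x. 0 < x \<Longrightarrow> x < 1 \<Longrightarrow> \<bar>h x\<bar> \<le> \<bar>f x\<bar>"
  shows "set_integrable lborel {0<..<1} h"
proof (rule set_integrable_bound[of lborel "{0<..<1}" f h])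
  show "set_borel_measurable lborel {0<..<1} h"
    unfolding set_borel_measurable_def using assms(2) by measurable
  show "AE x\<in>{0<..<1} in lborel. norm (h x) \<le> norm (f x)"
    using assms(3) by auto
qed (rule assms(1))

lemma set_integral_sum_fin:
  fixes f :: "'i \<Rightarrow> real \<Rightarrow> real"
  assumes "\<And>i. i \<in> I \<Longrightarrow> set_integrable M A (f i)"
  shows "(LINT x:A|M. (\<Sum>i\<in>I. f i x)) = (\<Sum>i\<in>I. LINT x:A|M. f i x)"
  unfolding set_lebesgue_integral_def scaleR_sum_right
  by (rule Bochner_Integration.integral_sum[where I=I and M=M and f="\<lambda>i x. indicator A x *\<^sub>R f i x"]) (use assms in \<open>auto simp: set_integrable_def\<close>)

lemma f1_meas[measurable]: "f1 W P \<in> borel_measurable borel"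
  unfolding f1_def by measurable

lemma E1_eq:
  assumes [measurable]: "g \<in> borel_measurable borel"
    and gi: "set_integrable lborel {0<..<1} g"
    and P: "\<And>w. w \<in> W \<Longrightarrow> P w \<le> 1"
  shows "E1 W P g = (\<Sum>w\<in>{w\<in>W. P w > 0}. LBINT x:{0<..<1}. x powr (1 / P w - 1) * g x)"
proof -
  have "E1 W P g = integral\<^sup>L lborel (\<lambda>x. (indicator {0..1} x * f1 W P x) *\<^sub>R g x)"
    unfolding E1_def mu1_def
    by (rule integral_density) (auto simp: f1_def intro!: AE_I2 mult_nonneg_nonneg sum_nonneg)
  also have "\<dots> = (LBINT x:{0..1}. f1 W P x * g x)" by (simp add: set_lebesgue_integral_def mult.assoc)
  also have "\<dots> = (LBINT x:{0<..<1}. f1 W P x * g x)"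
    by (rule set_integral_discrete_difference[where X="{0,1}"]) auto
  also have "\<dots> = (LBINT x:{0<..<1}. (\<Sum>w\<in>{w\<in>W. P w > 0}. x powr (1 / P w - 1) * g x))"
    by (simp add: f1_def sum_distrib_right)
  also have "\<dots> = (\<Sum>w\<in>{w\<in>W. P w > 0}. LBINT x:{0<..<1}. x powr (1 / P w - 1) * g x)"
  proof (rule set_integral_sum_fin)
    fix w assume w: "w \<in> {w\<in>W. P w > 0}"
    then have e: "0 \<le> 1 / P w - 1" using P by (auto simp: field_simps)
    show "set_integrable lborel {0<..<1} (\<lambda>x. x powr (1 / P w - 1) * g x)"
    proof (rule sint_bound[OF gi])
      fix x :: real assume "0 < x" "x < 1"
      then have "x powr (1 / P w - 1) \<le> 1" using e by (simp add: powr_le1)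
      then show "\<bar>x powr (1 / P w - 1) * g x\<bar> \<le> \<bar>g x\<bar>"
        by (simp add: abs_mult mult_left_le_one_le)
    qed measurable
  qed
  finally show ?thesis .
qed

lemma sint_const: "set_integrable lborel {0<..<1::real} (\<lambda>_. c::real)"
proof -
  have "set_integrable lborel {0..1::real} (\<lambda>_. c)"
    by (rule borel_integrable_atLeastAtMost') (rule continuous_on_const)
  then show ?thesis by (rule set_integrable_subset) auto
qed

lemma FTC01:
  fixes f F :: "real \<Rightarrow> real"
  assumes deriv: "\<And>x. 0 < x \<Longrightarrow> x < 1 \<Longrightarrow> (F has_real_derivative f x) (at x)"
    and cont: "\<And>x. 0 < x \<Longrightarrow> x < 1 \<Longrightarrow> isCont f x"
    and int: "set_integrable lborel {0<..<1} f"
    and A: "(F \<longlongrightarrow> A) (at_right 0)"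
    and B: "(F \<longlongrightarrow> B) (at_left 1)"
  shows "(LBINT x:{0<..<1}. f x) = B - A"
proof -
  have "(LBINT x=ereal 0..ereal 1. f x) = B - A"
  proof (rule interval_integral_FTC_integrable)
    show "(F has_vector_derivative f x) (at x)" if "ereal 0 < ereal x" "ereal x < ereal 1" for x
      using deriv[of x] that by (simp add: has_real_derivative_iff_has_vector_derivative)
    show "isCont f x" if "ereal 0 < ereal x" "ereal x < ereal 1" for x
      using cont[of x] that by simp
    show "set_integrable lborel (einterval (ereal 0) (ereal 1)) f"
      using int by simp
    show "((F \<circ> real_of_ereal) \<longlongrightarrow> A) (at_right (ereal 0))"
      using A by (simp add: ereal_tendsto_simps1)
    show "((F \<circ> real_of_ereal) \<longlongrightarrow> B) (at_left (ereal 1))"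
      using B by (simp add: ereal_tendsto_simps1)
  qed simp
  then show ?thesis by (simp add: interval_lebesgue_integral_def)
qed

lemma FTC01_nonneg:
  fixes f F :: "real \<Rightarrow> real"
  assumes deriv: "\<And>x. 0 < x \<Longrightarrow> x < 1 \<Longrightarrow> (F has_real_derivative f x) (at x)"
    and cont: "\<And>x. 0 < x \<Longrightarrow> x < 1 \<Longrightarrow> isCont f x"
    and nn: "\<And>x. 0 < x \<Longrightarrow> x < 1 \<Longrightarrow> 0 \<le> f x"
    and A: "(F \<longlongrightarrow> A) (at_right 0)"
    and B: "(F \<longlongrightarrow> B) (at_left 1)"
  shows "set_integrable lborel {0<..<1} f"
proof -
  have "set_integrable lborel (einterval (ereal 0) (ereal 1)) f"
  proof (rule interval_integral_FTC_nonneg)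
    show "DERIV F x :> f x" if "ereal 0 < ereal x" "ereal x < ereal 1" for x
      using deriv[of x] that by simp
    show "isCont f x" if "ereal 0 < ereal x" "ereal x < ereal 1" for x
      using cont[of x] that by simp
    show "AE x in lborel. ereal 0 < ereal x \<longrightarrow> ereal x < ereal 1 \<longrightarrow> 0 \<le> f x"
      using nn by simp
    show "((F \<circ> real_of_ereal) \<longlongrightarrow> A) (at_right (ereal 0))"
      using A by (simp add: ereal_tendsto_simps1)
    show "((F \<circ> real_of_ereal) \<longlongrightarrow> B) (at_left (ereal 1))"
      using B by (simp add: ereal_tendsto_simps1)
  qed simp
  then show ?thesis by simp
qed

lemma tendsto_left_of_isCont: "isCont f (x::real) \<Longrightarrow> (f \<longlongrightarrow> f x) (at_left x)"
  by (simp add: isCont_def filterlim_at_split)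

lemma tendsto_right_of_isCont: "isCont f (x::real) \<Longrightarrow> (f \<longlongrightarrow> f x) (at_right x)"
  by (simp add: isCont_def filterlim_at_split)

lemma ibp:
  fixes g g' :: "real \<Rightarrow> real"
  assumes a: "1 \<le> a"
    and gm[measurable]: "g \<in> borel_measurable borel" and gm'[measurable]: "g' \<in> borel_measurable borel"
    and deriv: "\<And>x. 0 < x \<Longrightarrow> x < 1 \<Longrightarrow> (g has_real_derivative g' x) (at x)"
    and cont: "\<And>x. 0 < x \<Longrightarrow> x < 1 \<Longrightarrow> isCont g' x"
    and gint: "set_integrable lborel {0<..<1} g"
    and bnd: "\<And>x. 0 < x \<Longrightarrow> x < 1 \<Longrightarrow> \<bar>g' x * (x - x powr a)\<bar> \<le> B"
    and lim0: "((\<lambda>x. g x * (x powr a - x)) \<longlongrightarrow> 0) (at_right 0)"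
    and lim1: "((\<lambda>x. g x * (x powr a - x)) \<longlongrightarrow> 0) (at_left 1)"
  shows "set_integrable lborel {0<..<1} (\<lambda>x. g' x * (x - x powr a))"
    and "(LBINT x:{0<..<1}. x powr (a-1) * g x) =
           (1/a) * ((LBINT x:{0<..<1}. g x) + (LBINT x:{0<..<1}. g' x * (x - x powr a)))"
proof -
  show i1: "set_integrable lborel {0<..<1} (\<lambda>x. g' x * (x - x powr a))"
  proof (rule sint_bound[OF sint_const[of B]])
    fix x :: real assume "0 < x" "x < 1"
    then show "\<bar>g' x * (x - x powr a)\<bar> \<le> \<bar>B\<bar>" using bnd[of x] by linarith
  qed measurable
  have i2: "set_integrable lborel {0<..<1} (\<lambda>x. x powr (a-1) * g x)"
  proof (rule sint_bound[OF gint])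
    fix x :: real assume "0 < x" "x < 1"
    then have "x powr (a - 1) \<le> 1" using a by (simp add: powr_le1)
    then show "\<bar>x powr (a - 1) * g x\<bar> \<le> \<bar>g x\<bar>"
      by (simp add: abs_mult mult_left_le_one_le)
  qed measurable
  define f where "f x = a * (x powr (a-1) * g x) - g x - g' x * (x - x powr a)" for x
  have fi: "set_integrable lborel {0<..<1} f"
    unfolding f_def using i1 i2 gint by (intro set_integral_diff set_integrable_mult_right) auto
  have fv: "(LBINT x:{0<..<1}. f x) = a * (LBINT x:{0<..<1}. x powr (a-1) * g x) - (LBINT x:{0<..<1}. g x)
      - (LBINT x:{0<..<1}. g' x * (x - x powr a))"
    unfolding f_def using i1 i2 gint
    by (simp add: set_integral_diff set_integrable_mult_right)
  have "(LBINT x:{0<..<1}. f x) = 0 - 0"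
  proof (rule FTC01[OF _ _ fi lim0 lim1])
    fix x :: real assume x: "0 < x" "x < 1"
    show "((\<lambda>x. g x * (x powr a - x)) has_real_derivative f x) (at x)"
      using x deriv[OF x]
      by (auto intro!: derivative_eq_intros simp: f_def algebra_simps)
    have "isCont g x" using deriv[OF x] by (rule DERIV_isCont)
    then show "isCont f x" using x cont[OF x] unfolding f_def
      by (auto intro!: continuous_intros)
  qed
  with fv have "a * (LBINT x:{0<..<1}. x powr (a-1) * g x) = (LBINT x:{0<..<1}. g x)
      + (LBINT x:{0<..<1}. g' x * (x - x powr a))" by simp
  then show "(LBINT x:{0<..<1}. x powr (a-1) * g x) =
           (1/a) * ((LBINT x:{0<..<1}. g x) + (LBINT x:{0<..<1}. g' x * (x - x powr a)))"
    using a by (simp add: field_simps)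
qed

lemma xlnx_bound:
  fixes x :: real assumes "0 < x" "x < 1"
  shows "\<bar>x * ln x\<bar> \<le> 2 * sqrt x"
proof -
  have s: "0 < sqrt x" using assms by simp
  have "ln (1 / sqrt x) \<le> 1 / sqrt x - 1" by (rule ln_le_minus_one) (use s in simp)
  moreover have "ln (1 / sqrt x) = - ln x / 2" using assms by (simp add: ln_div ln_sqrt)
  ultimately have "- ln x \<le> 2 / sqrt x" by (simp add: field_simps)
  moreover have "ln x \<le> 0" using assms by simp
  ultimately have "x * (- ln x) \<le> x * (2 / sqrt x)" using assms
    by (intro mult_left_mono) auto
  moreover have "\<bar>x * ln x\<bar> = x * (- ln x)" using \<open>ln x \<le> 0\<close> assms by (simp add: abs_mult)
  ultimately have "\<bar>x * ln x\<bar> \<le> x * (2 / sqrt x)" by simp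
  also have "x * (2 / sqrt x) = 2 * sqrt x" using assms
    by (metis divide_divide_eq_right mult.commute real_div_sqrt less_imp_le times_divide_eq_right)
  finally show ?thesis .
qed

lemma xlnx0: "((\<lambda>x::real. x * ln x) \<longlongrightarrow> 0) (at_right 0)"
proof (rule Lim_null_comparison)
  show "\<forall>\<^sub>F x in at_right 0. norm (x * ln x) \<le> 2 * sqrt x"
    using eventually_at_rightI[of 0 1] xlnx_bound by (auto intro!: eventually_at_rightI[of 0 1])
  have "((\<lambda>x::real. 2 * sqrt x) \<longlongrightarrow> 2 * sqrt 0) (at_right 0)"
    by (intro tendsto_intros)
  then show "((\<lambda>x::real. 2 * sqrt x) \<longlongrightarrow> 0) (at_right 0)" by simp
qed

lemma xlnx1: "((\<lambda>x::real. (1 - x) * ln (1 - x)) \<longlongrightarrow> 0) (at_left 1)"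
proof (rule Lim_null_comparison)
  show "\<forall>\<^sub>F x in at_left 1. norm ((1 - x) * ln (1 - x)) \<le> 2 * sqrt (1 - x)"
    using xlnx_bound by (auto intro!: eventually_at_leftI[of 0 1])
  have "((\<lambda>x::real. 2 * sqrt (1 - x)) \<longlongrightarrow> 2 * sqrt (1 - 1)) (at_left 1)"
    by (intro tendsto_intros)
  then show "((\<lambda>x::real. 2 * sqrt (1 - x)) \<longlongrightarrow> 0) (at_left 1)" by simp
qed

lemma powr_int:
  assumes b: "0 \<le> b"
  shows "set_integrable lborel {0<..<1} (\<lambda>x::real. x powr b)"
    and "(LBINT x:{0<..<1}. x powr b) = 1 / (b + 1)"
proof -
  show i: "set_integrable lborel {0<..<1} (\<lambda>x. x powr b)"
  proof (rule sint_bound[OF sint_const[of 1]])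
    fix x :: real assume "0 < x" "x < 1"
    then show "\<bar>x powr b\<bar> \<le> \<bar>1\<bar>" using b by (simp add: powr_le1)
  qed measurable
  have "(LBINT x:{0<..<1}. x powr b) = 1 / (b + 1) - 0"
  proof (rule FTC01[OF _ _ i, where F="\<lambda>x. x powr (b+1) / (b+1)"])
    fix x :: real assume x: "0 < x" "x < 1"
    show "((\<lambda>x. x powr (b + 1) / (b + 1)) has_real_derivative x powr b) (at x)"
      using x b by (auto intro!: derivative_eq_intros simp: add_nonneg_eq_0_iff)
    show "isCont (\<lambda>x. x powr b) x" using x by (auto intro!: continuous_intros)
  next
    have "((\<lambda>x::real. x powr (b + 1)) \<longlongrightarrow> 0) (at_right 0)"
      using b by (intro tendsto_zero_powrI) (auto intro!: tendsto_intros eventually_at_rightI[of 0 1])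
    then show "((\<lambda>x. x powr (b + 1) / (b + 1)) \<longlongrightarrow> 0) (at_right 0)"
      using tendsto_divide_zero by blast
  next
    have "isCont (\<lambda>x::real. x powr (b + 1) / (b + 1)) 1"
      using b by (auto intro!: continuous_intros)
    then show "((\<lambda>x. x powr (b + 1) / (b + 1)) \<longlongrightarrow> 1 / (b + 1)) (at_left 1)"
      using tendsto_left_of_isCont by fastforce
  qed
  then show "(LBINT x:{0<..<1}. x powr b) = 1 / (b + 1)" by simp
qed

lemma ln_int: "set_integrable lborel {0<..<1} (\<lambda>x::real. - ln x)"
proof (rule FTC01_nonneg[where F="\<lambda>x::real. x - x * ln x" and A=0 and B=1])
  fix x :: real assume x: "0 < x" "x < 1"
  show "((\<lambda>x. x - x * ln x) has_real_derivative - ln x) (at x)"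
    using x by (auto intro!: derivative_eq_intros)
  show "isCont (\<lambda>x. - ln x) x" using x by (auto intro!: continuous_intros)
  show "0 \<le> - ln x" using x by simp
next
  show "((\<lambda>x::real. x - x * ln x) \<longlongrightarrow> 0) (at_right 0)"
    using tendsto_diff[OF tendsto_ident_at xlnx0] by simp
  have c: "isCont (\<lambda>x::real. x - x * ln x) 1" by (auto intro!: continuous_intros)
  show "((\<lambda>x::real. x - x * ln x) \<longlongrightarrow> 1) (at_left 1)"
    using tendsto_left_of_isCont[OF c] by simp
qed

lemma ln_int': "set_integrable lborel {0<..<1} (\<lambda>x::real. ln x)"
  using set_integrable_mult_right[OF ln_int, of "-1"] by simp

lemma ars_int: "set_integrable lborel {0<..<1} h_ars"
  unfolding h_ars_def
proof (rule FTC01_nonneg[where F="\<lambda>x::real. (1 - x) * ln (1 - x) - (1 - x)" and A="-1" and B=0])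
  fix x :: real assume x: "0 < x" "x < 1"
  show "((\<lambda>x. (1 - x) * ln (1 - x) - (1 - x)) has_real_derivative - ln (1 - x)) (at x)"
    using x by (auto intro!: derivative_eq_intros)
  show "isCont (\<lambda>x. - ln (1 - x)) x" using x by (auto intro!: continuous_intros)
  show "0 \<le> - ln (1 - x)" using x by simp
next
  have c: "isCont (\<lambda>x::real. (1 - x) * ln (1 - x) - (1 - x)) 0" by (auto intro!: continuous_intros)
  show "((\<lambda>x::real. (1 - x) * ln (1 - x) - (1 - x)) \<longlongrightarrow> -1) (at_right 0)"
    using tendsto_right_of_isCont[OF c] by simp
  show "((\<lambda>x::real. (1 - x) * ln (1 - x) - (1 - x)) \<longlongrightarrow> 0) (at_left 1)"
  proof -
    have "((\<lambda>x::real. 1 - x) \<longlongrightarrow> 1 - 1) (at_left 1)" by (intro tendsto_intros)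
    then show ?thesis using tendsto_diff[OF xlnx1, of "\<lambda>x. 1 - x" 0] by simp
  qed
qed

lemma bern:
  fixes x m :: real
  assumes x: "0 < x" "x < 1" and m: "0 \<le> m"
  shows "x - x powr (m + 1) \<le> m * (1 - x)" and "x powr (m + 1) \<le> x"
proof -
  have p: "x powr (m + 1) = x * x powr m" using x by (simp add: powr_add)
  have "x powr m = exp (m * ln x)" using x by (simp add: powr_def)
  also have "\<dots> \<ge> 1 + m * ln x" by (rule exp_ge_add_one_self)
  finally have "1 - x powr m \<le> - m * ln x" by simp
  moreover have "- ln x \<le> 1 / x - 1"
    using ln_le_minus_one[of "1/x"] x by (simp add: ln_div)
  moreover have "m * (- ln x) \<le> m * (1 / x - 1)"
    using m \<open>- ln x \<le> 1 / x - 1\<close> by (rule mult_left_mono[rotated])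
  ultimately have "1 - x powr m \<le> m * (1 / x - 1)" by simp
  then have "x * (1 - x powr m) \<le> x * (m * (1 / x - 1))"
    using x by (intro mult_left_mono) auto
  also have "\<dots> = m * (1 - x)" using x by (simp add: field_simps)
  finally have "x * (1 - x powr m) \<le> m * (1 - x)" .
  then show "x - x powr (m + 1) \<le> m * (1 - x)" unfolding p by (simp add: algebra_simps)
  have "x powr m \<le> 1" using x m by (simp add: powr_le1)
  then show "x powr (m + 1) \<le> x" using x by (simp add: p mult_left_le)
qed

lemma lnpow:
  fixes T :: "nat set" and e :: "nat \<Rightarrow> real" and a emin Emax :: real
  assumes T: "finite T" "T \<noteq> {}"
    and emin: "0 < emin" "\<And>i. i \<in> T \<Longrightarrow> emin \<le> e i"
    and Emax: "\<And>i. i \<in> T \<Longrightarrow> e i \<le> Emax"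
    and a: "1 \<le> a"
  defines "G \<equiv> \<lambda>x::real. ln (\<Sum>i\<in>T. x powr e i)"
  shows "set_integrable lborel {0<..<1} G"
    and "emin * (1 - 1/a) / a \<le> (LBINT x:{0<..<1}. x powr (a-1) * G x) - (1/a) * (LBINT x:{0<..<1}. G x)"
    and "(LBINT x:{0<..<1}. x powr (a-1) * G x) - (1/a) * (LBINT x:{0<..<1}. G x) \<le> Emax * (1 - 1/a) / a"
proof -
  obtain i0 where i0: "i0 \<in> T" using T by auto
  have Emax0: "0 < Emax" using emin Emax[OF i0] emin(2)[OF i0] by linarith
  define S where "S x = (\<Sum>i\<in>T. x powr e i)" for x :: real
  define G' where "G' x = (\<Sum>i\<in>T. e i * x powr (e i - 1)) / S x" for x :: real
  have Gd: "G = (\<lambda>x. ln (S x))" unfolding G_def S_def by simp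
  have Spos: "0 < S x" if "0 < x" for x
    unfolding S_def using T that by (intro sum_pos) auto
  have Sle: "S x \<le> real (card T)" if "0 < x" "x < 1" for x
  proof -
    have "S x \<le> (\<Sum>i\<in>T. 1)" unfolding S_def
      using that emin Emax by (intro sum_mono powr_le1) (auto intro: order.trans[OF less_imp_le[OF emin(1)]])
    then show ?thesis by simp
  qed
  have Sge: "x powr Emax \<le> S x" if "0 < x" "x < 1" for x
  proof -
    have "x powr Emax \<le> x powr e i0" using that Emax[OF i0] by (intro powr_mono') auto
    also have "\<dots> \<le> S x" unfolding S_def using T i0 by (intro member_le_sum) auto
    finally show ?thesis .
  qed
  have xG': "emin \<le> x * G' x \<and> x * G' x \<le> Emax" if x: "0 < x" "x < 1" for x
  proof -
    have eq: "x * G' x = (\<Sum>i\<in>T. e i * x powr e i) / S x"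
    proof -
      have "x * (\<Sum>i\<in>T. e i * x powr (e i - 1)) = (\<Sum>i\<in>T. e i * x powr e i)"
        unfolding sum_distrib_left
      proof (rule sum.cong)
        fix i assume "i \<in> T"
        have "x * x powr (e i - 1) = x powr e i" using x by (simp add: powr_mult_base)
        then show "x * (e i * x powr (e i - 1)) = e i * x powr e i" by (simp add: algebra_simps)
      qed simp
      then show ?thesis unfolding G'_def by simp
    qed
    have "emin * S x \<le> (\<Sum>i\<in>T. e i * x powr e i)"
      unfolding S_def sum_distrib_left using emin(2) by (intro sum_mono mult_right_mono) auto
    moreover have "(\<Sum>i\<in>T. e i * x powr e i) \<le> Emax * S x"
      unfolding S_def sum_distrib_left using Emax by (intro sum_mono mult_right_mono) auto
    ultimately show ?thesis using Spos[OF x(1)] unfolding eq by (simp add: field_simps)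
  qed
  have Sm[measurable]: "S \<in> borel_measurable borel" unfolding S_def by measurable
  have Gm[measurable]: "G \<in> borel_measurable borel" unfolding Gd by measurable
  have G'm[measurable]: "G' \<in> borel_measurable borel" unfolding G'_def by measurable
  have Gbound: "\<bar>G x\<bar> \<le> \<bar>Emax * (- ln x) + ln (real (card T))\<bar>" if x: "0 < x" "x < 1" for x
  proof -
    have c: "1 \<le> real (card T)" using T by (simp add: Suc_leI card_gt_0_iff)
    have "G x \<le> ln (real (card T))" unfolding Gd using Sle[OF x] Spos[OF x(1)] by simp
    moreover have "Emax * ln x \<le> G x"
    proof -
      have "ln (x powr Emax) \<le> ln (S x)" using Sge[OF x] Spos[OF x(1)] x by (subst ln_le_cancel_iff) auto
      moreover have "ln (x powr Emax) = Emax * ln x" using x by (simp add: ln_powr)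
      ultimately show ?thesis unfolding Gd by simp
    qed
    moreover have "0 \<le> ln (real (card T))" using c by simp
    moreover have "0 \<le> Emax * (- ln x)" using Emax0 x by (intro mult_nonneg_nonneg) auto
    ultimately show ?thesis by linarith
  qed
  show Gi: "set_integrable lborel {0<..<1} G"
  proof (rule sint_bound[OF _ Gm Gbound])
    show "set_integrable lborel {0<..<1} (\<lambda>x. Emax * (- ln x) + ln (real (card T)))"
      by (intro set_integral_add set_integrable_mult_right ln_int sint_const)
  qed auto
  have Sd: "(S has_real_derivative (\<Sum>i\<in>T. e i * x powr (e i - 1))) (at x)" if "0 < x" for x
    unfolding S_def using that by (auto intro!: derivative_eq_intros)
  have Scont: "isCont S x" if "0 < x" for x using Sd[OF that] by (rule DERIV_isCont)
  have hd: "(G has_real_derivative G' x) (at x)" if x: "0 < x" "x < 1" for x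
    unfolding Gd G'_def using Sd[OF x(1)] Spos[OF x(1)]
    by (auto intro!: derivative_eq_intros simp: field_simps)
  have hc: "isCont G' x" if x: "0 < x" "x < 1" for x
    unfolding G'_def using x Scont[OF x(1)] Spos[OF x(1)]
    by (auto intro!: continuous_intros)
  have hb: "\<bar>G' x * (x - x powr a)\<bar> \<le> Emax" if x: "0 < x" "x < 1" for x
  proof -
      have p: "x powr a = x * x powr (a - 1)" using x by (simp add: powr_mult_base)
      have q: "0 \<le> 1 - x powr (a - 1)" "1 - x powr (a - 1) \<le> 1"
        using x a by (auto simp: powr_le1)
      have eq: "G' x * (x - x powr a) = (x * G' x) * (1 - x powr (a - 1))" unfolding p by (simp add: algebra_simps)
      have "0 \<le> (x * G' x) * (1 - x powr (a - 1))" using xG'[OF x] emin q by simp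
      moreover have "(x * G' x) * (1 - x powr (a - 1)) \<le> Emax * 1"
        using xG'[OF x] q emin by (intro mult_mono) auto
      ultimately show "\<bar>G' x * (x - x powr a)\<bar> \<le> Emax" unfolding eq by simp
  qed
  have hl0: "((\<lambda>x. G x * (x powr a - x)) \<longlongrightarrow> 0) (at_right 0)"
      proof (rule Lim_null_comparison)
        show "\<forall>\<^sub>F x in at_right 0. norm (G x * (x powr a - x)) \<le> Emax * (- (x * ln x)) + x * ln (real (card T))"
        proof (rule eventually_at_rightI[of 0 1])
          fix x :: real assume "x \<in> {0<..<1}"
          then have x: "0 < x" "x < 1" by auto
          have "x powr a \<le> x" using bern(2)[OF x, of "a - 1"] a by simp
          then have "\<bar>x powr a - x\<bar> \<le> x" using x by simp
          then have "\<bar>G x\<bar> * \<bar>x powr a - x\<bar> \<le> \<bar>Emax * (- ln x) + ln (real (card T))\<bar> * x"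
            using Gbound[OF x] by (intro mult_mono) auto
          also have "\<bar>Emax * (- ln x) + ln (real (card T))\<bar> = Emax * (- ln x) + ln (real (card T))"
            using x Emax0 T by (intro abs_of_nonneg add_nonneg_nonneg mult_nonneg_nonneg) (auto simp: Suc_leI card_gt_0_iff)
          finally have "\<bar>G x * (x powr a - x)\<bar> \<le> (Emax * (- ln x) + ln (real (card T))) * x"
            by (simp only: abs_mult)
          then show "norm (G x * (x powr a - x)) \<le> Emax * (- (x * ln x)) + x * ln (real (card T))"
            by (simp add: algebra_simps)
        qed simp
        have "((\<lambda>x. Emax * (- (x * ln x)) + x * ln (real (card T))) \<longlongrightarrow> Emax * (- 0) + 0 * ln (real (card T))) (at_right 0)"
          by (intro tendsto_intros xlnx0 tendsto_ident_at)
        then show "((\<lambda>x. Emax * (- (x * ln x)) + x * ln (real (card T))) \<longlongrightarrow> 0) (at_right 0)" by simp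
      qed
  have hl1: "((\<lambda>x. G x * (x powr a - x)) \<longlongrightarrow> 0) (at_left 1)"
  proof -
      have S1: "0 < S 1" using Spos by simp
      have c: "isCont (\<lambda>x. G x * (x powr a - x)) 1"
        unfolding Gd using Scont[of 1] S1 by (auto intro!: continuous_intros)
      show "((\<lambda>x. G x * (x powr a - x)) \<longlongrightarrow> 0) (at_left 1)"
        using tendsto_left_of_isCont[OF c] by simp
  qed
  note ib = ibp[OF a Gm G'm hd hc Gi hb hl0 hl1]
  note key = ib(2) and Ji = ib(1)
  have pi: "set_integrable lborel {0<..<1} (\<lambda>x::real. x powr (a - 1))"
    and pv: "(LBINT x:{0<..<1}. x powr (a - 1)) = 1 / a"
    using powr_int[of "a - 1"] a by auto
  have oi: "set_integrable lborel {0<..<1} (\<lambda>x::real. 1 - x powr (a - 1))"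
    using pi sint_const by (intro set_integral_diff) auto
  have ov: "(LBINT x:{0<..<1}. 1 - x powr (a - 1)) = 1 - 1 / a"
  proof -
    have "(LBINT x:{0<..<1::real}. (1::real)) = 1"
      by (subst set_integral_const) auto
    then show ?thesis using pi pv sint_const[of 1] by (simp add: set_integral_diff)
  qed
  have Jeq: "x - x powr a = x * (1 - x powr (a - 1))" if "0 < x" for x :: real
    using that by (simp add: powr_mult_base algebra_simps)
  have J1: "emin * (1 - 1/a) \<le> (LBINT x:{0<..<1}. G' x * (x - x powr a))"
  proof -
    have "emin * (1 - 1/a) = (LBINT x:{0<..<1}. emin * (1 - x powr (a - 1)))" using ov by simp
    also have "\<dots> \<le> (LBINT x:{0<..<1}. G' x * (x - x powr a))"
    proof (rule set_integral_mono[OF _ Ji])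
      show "set_integrable lborel {0<..<1} (\<lambda>x. emin * (1 - x powr (a - 1)))" using oi by simp
      fix x :: real assume "x \<in> {0<..<1}"
      then have x: "0 < x" "x < 1" by auto
      have q: "0 \<le> 1 - x powr (a - 1)" using x a by (auto simp: powr_le1)
      have "emin * (1 - x powr (a - 1)) \<le> (x * G' x) * (1 - x powr (a - 1))"
        using xG'[OF x] q by (intro mult_right_mono) auto
      moreover have "G' x * (x - x powr a) = (x * G' x) * (1 - x powr (a - 1))" unfolding Jeq[OF x(1)] by simp
      ultimately show "emin * (1 - x powr (a - 1)) \<le> G' x * (x - x powr a)" by linarith
    qed
    finally show ?thesis .
  qed
  have J2: "(LBINT x:{0<..<1}. G' x * (x - x powr a)) \<le> Emax * (1 - 1/a)"
  proof -
    have "(LBINT x:{0<..<1}. G' x * (x - x powr a)) \<le> (LBINT x:{0<..<1}. Emax * (1 - x powr (a - 1)))"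
    proof (rule set_integral_mono[OF Ji])
      show "set_integrable lborel {0<..<1} (\<lambda>x. Emax * (1 - x powr (a - 1)))" using oi by simp
      fix x :: real assume "x \<in> {0<..<1}"
      then have x: "0 < x" "x < 1" by auto
      have q: "0 \<le> 1 - x powr (a - 1)" using x a by (auto simp: powr_le1)
      have "(x * G' x) * (1 - x powr (a - 1)) \<le> Emax * (1 - x powr (a - 1))"
        using xG'[OF x] q by (intro mult_right_mono) auto
      moreover have "G' x * (x - x powr a) = (x * G' x) * (1 - x powr (a - 1))" unfolding Jeq[OF x(1)] by simp
      ultimately show "G' x * (x - x powr a) \<le> Emax * (1 - x powr (a - 1))" by linarith
    qed
    also have "\<dots> = Emax * (1 - 1/a)" using ov by simp
    finally show ?thesis .
  qed
  have a0: "0 < a" using a by simp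
  have alg: "u = (1/a) * (v + w) \<Longrightarrow> u - (1/a) * v = w / a" for u v w :: real
    by (simp add: add_divide_distrib)
  note D = alg[OF key]
  show "emin * (1 - 1/a) / a \<le> (LBINT x:{0<..<1}. x powr (a-1) * G x) - (1/a) * (LBINT x:{0<..<1}. G x)"
  proof -
    have "emin * (1 - 1/a) / a \<le> (LBINT x:{0<..<1}. G' x * (x - x powr a)) / a"
      by (rule divide_right_mono[OF J1]) (use a0 in auto)
    then show ?thesis using D by linarith
  qed
  show "(LBINT x:{0<..<1}. x powr (a-1) * G x) - (1/a) * (LBINT x:{0<..<1}. G x) \<le> Emax * (1 - 1/a) / a"
  proof -
    have "(LBINT x:{0<..<1}. G' x * (x - x powr a)) / a \<le> Emax * (1 - 1/a) / a"
      by (rule divide_right_mono[OF J2]) (use a0 in auto)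
    then show ?thesis using D by linarith
  qed
qed

lemma cont01_int:
  fixes f :: "real \<Rightarrow> real"
  assumes "continuous_on {0..1} f"
  shows "set_integrable lborel {0<..<1} f"
  using borel_integrable_atLeastAtMost'[OF assms] by (rule set_integrable_subset) auto

lemma intU:
  fixes m :: real assumes m: "0 \<le> m"
  shows "set_integrable lborel {0<..<1} (\<lambda>x. 2 * m / (1 + m * (1 - x)))"
    and "(LBINT x:{0<..<1}. 2 * m / (1 + m * (1 - x))) = 2 * ln (1 + m)"
proof -
  have pos: "0 < 1 + m * (1 - x)" if "x \<le> 1" for x using m that by (smt (verit) mult_nonneg_nonneg)
  show i: "set_integrable lborel {0<..<1} (\<lambda>x. 2 * m / (1 + m * (1 - x)))"
  proof -
    have nz[simp]: "1 + m * (1 - x) = 0 \<longleftrightarrow> False" if "x \<le> 1" for x using pos[OF that] by auto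
    show ?thesis by (intro cont01_int continuous_intros) auto
  qed
  have "(LBINT x:{0<..<1}. 2 * m / (1 + m * (1 - x))) = 0 - (- 2 * ln (1 + m))"
  proof (rule FTC01[OF _ _ i, where F="\<lambda>x. - 2 * ln (1 + m * (1 - x))"])
    fix x :: real assume x: "0 < x" "x < 1"
    show "((\<lambda>x. - 2 * ln (1 + m * (1 - x))) has_real_derivative 2 * m / (1 + m * (1 - x))) (at x)"
      using pos[of x] x by (auto intro!: derivative_eq_intros simp: field_simps)
    show "isCont (\<lambda>x. 2 * m / (1 + m * (1 - x))) x" using pos[of x] x by (auto intro!: continuous_intros)
  next
    have c: "isCont (\<lambda>x. - 2 * ln (1 + m * (1 - x))) 0" using pos[of 0] by (auto intro!: continuous_intros)
    show "((\<lambda>x. - 2 * ln (1 + m * (1 - x))) \<longlongrightarrow> - 2 * ln (1 + m)) (at_right 0)"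
      using tendsto_right_of_isCont[OF c] by simp
    have c: "isCont (\<lambda>x. - 2 * ln (1 + m * (1 - x))) 1" using pos[of 1] by (auto intro!: continuous_intros)
    show "((\<lambda>x. - 2 * ln (1 + m * (1 - x))) \<longlongrightarrow> 0) (at_left 1)"
      using tendsto_left_of_isCont[OF c] by simp
  qed
  then show "(LBINT x:{0<..<1}. 2 * m / (1 + m * (1 - x))) = 2 * ln (1 + m)" by simp
qed

lemma intL:
  fixes m :: real assumes m: "0 < m"
  shows "set_integrable lborel {0<..<1} (\<lambda>x. m * x / (1 + m * (1 - x)))"
    and "(LBINT x:{0<..<1}. m * x / (1 + m * (1 - x))) = (1 + m) / m * ln (1 + m) - 1"
proof -
  have pos: "0 < 1 + m * (1 - x)" if "x \<le> 1" for x using m that by (smt (verit) mult_nonneg_nonneg)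
  show i: "set_integrable lborel {0<..<1} (\<lambda>x. m * x / (1 + m * (1 - x)))"
  proof -
    have nz[simp]: "1 + m * (1 - x) = 0 \<longleftrightarrow> False" if "x \<le> 1" for x using pos[OF that] by auto
    show ?thesis by (intro cont01_int continuous_intros) auto
  qed
  define F where "F x = - x - (1 + m) / m * ln (1 + m * (1 - x))" for x
  have "(LBINT x:{0<..<1}. m * x / (1 + m * (1 - x))) = (-1) - (- ((1 + m) / m * ln (1 + m)))"
  proof (rule FTC01[OF _ _ i, where F=F])
    fix x :: real assume x: "0 < x" "x < 1"
    define d where "d = 1 + m * (1 - x)"
    have d: "0 < d" unfolding d_def using pos[of x] x by simp
    have m0: "m \<noteq> 0" using m by simp
    have alg: "- 1 - (1 + m) / m * (- m / d) = (1 + m - d) / d"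
      using d m0 by (simp add: field_simps)
    have "(F has_real_derivative (- 1 - (1 + m) / m * (- m / d))) (at x)"
      unfolding F_def d_def using pos[of x] x m by (auto intro!: derivative_eq_intros)
    moreover have "(1 + m - d) / d = m * x / (1 + m * (1 - x))" unfolding d_def by (simp add: algebra_simps)
    ultimately show "(F has_real_derivative m * x / (1 + m * (1 - x))) (at x)" using alg by simp
    show "isCont (\<lambda>x. m * x / (1 + m * (1 - x))) x" using pos[of x] x by (auto intro!: continuous_intros)
  next
    have c: "isCont F 0" unfolding F_def using pos[of 0] m by (auto intro!: continuous_intros)
    show "(F \<longlongrightarrow> - ((1 + m) / m * ln (1 + m))) (at_right 0)"
      using tendsto_right_of_isCont[OF c] by (simp add: F_def)
    have c: "isCont F 1" unfolding F_def using pos[of 1] m by (auto intro!: continuous_intros)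
    show "(F \<longlongrightarrow> -1) (at_left 1)"
      using tendsto_left_of_isCont[OF c] by (simp add: F_def)
  qed
  then show "(LBINT x:{0<..<1}. m * x / (1 + m * (1 - x))) = (1 + m) / m * ln (1 + m) - 1" by simp
qed

lemma ars_pt:
  fixes x m :: real
  assumes x: "0 < x" "x < 1" and m: "0 \<le> m"
  shows "m * x / (1 + m * (1 - x)) \<le> (x - x powr (m + 1)) / (1 - x)"
    and "(x - x powr (m + 1)) / (1 - x) \<le> 2 * m / (1 + m * (1 - x))"
proof -
  define t where "t = m * (1 - x)"
  have t0: "0 \<le> t" unfolding t_def using x m by simp
  have p: "x powr (m + 1) = x * x powr m" using x by (simp add: powr_add)
  have "x powr m = exp (m * ln x)" using x by (simp add: powr_def)
  also have "\<dots> \<le> exp (- t)"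
  proof -
    have "ln x \<le> x - 1" using x by (intro ln_le_minus_one) auto
    then have "m * ln x \<le> m * (x - 1)" using m by (rule mult_left_mono)
    then show ?thesis unfolding t_def by (simp add: algebra_simps)
  qed
  also have "\<dots> \<le> 1 / (1 + t)"
  proof -
    have "1 + t \<le> exp t" by (rule exp_ge_add_one_self)
    then have "exp (- t) * (1 + t) \<le> exp (-t) * exp t" by (intro mult_left_mono) auto
    then have "exp (- t) * (1 + t) \<le> 1" by (simp add: exp_minus)
    then show ?thesis using t0 by (simp add: field_simps)
  qed
  finally have xm: "x powr m \<le> 1 / (1 + t)" .
  have "m * x / (1 + t) * (1 - x) = x * (t / (1 + t))"
    unfolding t_def by (simp add: algebra_simps)
  also have "\<dots> \<le> x * (1 - x powr m)"
  proof -
    have "t / (1 + t) \<le> 1 - x powr m" using xm t0 by (simp add: field_simps)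
    then show ?thesis using x by (intro mult_left_mono) auto
  qed
  also have "\<dots> = x - x powr (m + 1)" unfolding p by (simp add: algebra_simps)
  finally have "m * x / (1 + t) * (1 - x) \<le> x - x powr (m + 1)" .
  then show "m * x / (1 + m * (1 - x)) \<le> (x - x powr (m + 1)) / (1 - x)"
    unfolding t_def[symmetric] using x by (simp add: pos_le_divide_eq)
  have u1: "(x - x powr (m + 1)) / (1 - x) \<le> m"
    using bern(1)[OF x m] x by (simp add: field_simps)
  have u2: "(x - x powr (m + 1)) / (1 - x) \<le> 1 / (1 - x)"
  proof -
    have "x - x powr (m + 1) \<le> 1" using x powr_ge_zero[of x "m+1"] by linarith
    then show ?thesis using x by (auto intro!: divide_right_mono)
  qed
  show "(x - x powr (m + 1)) / (1 - x) \<le> 2 * m / (1 + m * (1 - x))"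
  proof (cases "t \<le> 1")
    case True
    have "m * t \<le> m * 1" using True m by (intro mult_left_mono) auto
    then have "m \<le> 2 * m / (1 + t)" using True t0 m by (simp add: field_simps)
    then show ?thesis using u1 unfolding t_def by linarith
  next
    case False
    then have "m \<noteq> 0" unfolding t_def by auto
    then have mpos: "0 < m" using m by simp
    have tpos: "0 < t" using False by simp
    have "1 / (1 - x) = m / t" unfolding t_def using x mpos by simp
    also have "\<dots> \<le> 2 * m / (1 + t)"
    proof -
      have "m * (1 + t) \<le> m * (2 * t)" using False m by (intro mult_left_mono) auto
      then show ?thesis using tpos by (simp add: divide_simps algebra_simps)
    qed
    finally show ?thesis using u2 unfolding t_def by linarith
  qed
qed

lemma h_ars_meas[measurable]: "h_ars \<in> borel_measurable borel"
  unfolding h_ars_def by measurable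

lemma ars_K:
  fixes a :: real
  assumes a: "1 \<le> a"
  defines "K \<equiv> (LBINT x:{0<..<1}. x powr (a-1) * h_ars x) - (1/a) * (LBINT x:{0<..<1}. h_ars x)"
  shows "0 \<le> K" and "a * K \<le> 2 * ln a" and "1 < a \<Longrightarrow> ln a - 1 \<le> a * K"
proof -
  define m where "m = a - 1"
  have m: "0 \<le> m" using a m_def by simp
  have am: "a = m + 1" unfolding m_def by simp
  define g' where "g' x = 1 / (1 - x)" for x :: real
  have g'm[measurable]: "g' \<in> borel_measurable borel" unfolding g'_def by measurable
  have hd: "(h_ars has_real_derivative g' x) (at x)" if x: "0 < x" "x < 1" for x
    unfolding h_ars_def g'_def using x by (auto intro!: derivative_eq_intros simp: field_simps)
  have hc: "isCont g' x" if x: "0 < x" "x < 1" for x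
    unfolding g'_def using x by (auto intro!: continuous_intros)
  have j_eq: "g' x * (x - x powr a) = (x - x powr (m + 1)) / (1 - x)" for x
    unfolding g'_def am by simp
  have jnn: "0 \<le> g' x * (x - x powr a)" if x: "0 < x" "x < 1" for x
    unfolding j_eq using bern(2)[OF x m] x by simp
  have hb: "\<bar>g' x * (x - x powr a)\<bar> \<le> m" if x: "0 < x" "x < 1" for x
  proof -
    have "g' x * (x - x powr a) \<le> m"
      unfolding j_eq using bern(1)[OF x m] x by (simp add: field_simps)
    then show ?thesis using jnn[OF x] by simp
  qed
  have hl0: "((\<lambda>x. h_ars x * (x powr a - x)) \<longlongrightarrow> 0) (at_right 0)"
  proof -
    have c: "isCont h_ars 0" unfolding h_ars_def by (auto intro!: continuous_intros)
    have l1: "(h_ars \<longlongrightarrow> 0) (at_right 0)" using tendsto_right_of_isCont[OF c] by (simp add: h_ars_def)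
    have l2: "((\<lambda>x::real. x powr a) \<longlongrightarrow> 0) (at_right 0)"
      using a by (intro tendsto_zero_powrI) (auto intro!: tendsto_intros eventually_at_rightI[of 0 1])
    have "((\<lambda>x. h_ars x * (x powr a - x)) \<longlongrightarrow> 0 * (0 - 0)) (at_right 0)"
      by (intro tendsto_intros l1 l2 tendsto_ident_at)
    then show ?thesis by simp
  qed
  have hl1: "((\<lambda>x. h_ars x * (x powr a - x)) \<longlongrightarrow> 0) (at_left 1)"
  proof (rule Lim_null_comparison)
    show "\<forall>\<^sub>F x in at_left 1. norm (h_ars x * (x powr a - x)) \<le> m * \<bar>(1 - x) * ln (1 - x)\<bar>"
    proof (rule eventually_at_leftI[of 0])
      fix x :: real assume "x \<in> {0<..<1}"
      then have x: "0 < x" "x < 1" by auto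
      have "0 \<le> x - x powr a" using bern(2)[OF x m] am by simp
      moreover have "x - x powr a \<le> m * (1 - x)" using bern(1)[OF x m] am by simp
      moreover have "0 \<le> - ln (1 - x)" using x by simp
      ultimately have "(- ln (1 - x)) * (x - x powr a) \<le> (- ln (1 - x)) * (m * (1 - x))"
        by (intro mult_left_mono) auto
      moreover have "\<bar>h_ars x * (x powr a - x)\<bar> = (- ln (1 - x)) * (x - x powr a)"
        using \<open>0 \<le> x - x powr a\<close> \<open>0 \<le> - ln (1 - x)\<close> unfolding h_ars_def
        by (simp add: abs_mult abs_minus_commute)
      moreover have "m * \<bar>(1 - x) * ln (1 - x)\<bar> = (- ln (1 - x)) * (m * (1 - x))"
        using x \<open>0 \<le> - ln (1 - x)\<close> by (simp add: abs_mult)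
      ultimately show "norm (h_ars x * (x powr a - x)) \<le> m * \<bar>(1 - x) * ln (1 - x)\<bar>" by simp
    qed simp
    have "((\<lambda>x. m * \<bar>(1 - x) * ln (1 - x)\<bar>) \<longlongrightarrow> m * \<bar>0\<bar>) (at_left 1)"
      by (intro tendsto_intros xlnx1)
    then show "((\<lambda>x. m * \<bar>(1 - x) * ln (1 - x)\<bar>) \<longlongrightarrow> 0) (at_left 1)" by simp
  qed
  note ib = ibp[OF a h_ars_meas g'm hd hc ars_int hb hl0 hl1]
  note Ji = ib(1)
  define J where "J = (LBINT x:{0<..<1}. g' x * (x - x powr a))"
  have alg: "u = (1/a) * (v + w) \<Longrightarrow> u - (1/a) * v = w / a" for u v w :: real
    by (simp add: add_divide_distrib)
  have KJ: "K = J / a" unfolding K_def J_def using alg[OF ib(2)] by simp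
  have a0: "0 < a" using a by simp
  have aK: "a * K = J" unfolding KJ using a0 by simp
  have J0: "0 \<le> J"
  proof -
    have "(LBINT x:{0<..<1::real}. (0::real)) \<le> J" unfolding J_def
      by (rule set_integral_mono[OF sint_const Ji]) (use jnn in auto)
    then show ?thesis by simp
  qed
  show "0 \<le> K" unfolding KJ using J0 a0 by simp
  have "J \<le> (LBINT x:{0<..<1}. 2 * m / (1 + m * (1 - x)))" unfolding J_def
  proof (rule set_integral_mono[OF Ji intU(1)[OF m]])
    fix x :: real assume "x \<in> {0<..<1}"
    then have x: "0 < x" "x < 1" by auto
    show "g' x * (x - x powr a) \<le> 2 * m / (1 + m * (1 - x))"
      unfolding j_eq using ars_pt(2)[OF x m] .
  qed
  moreover have la: "ln a = ln (1 + m)" by (simp add: am add.commute)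
  ultimately show "a * K \<le> 2 * ln a" unfolding intU(2)[OF m] aK la by blast
  assume a1: "1 < a"
  then have mp: "0 < m" unfolding m_def by simp
  have "(1 + m) / m * ln (1 + m) - 1 \<le> J" unfolding J_def intL(2)[OF mp, symmetric]
  proof (rule set_integral_mono[OF intL(1)[OF mp] Ji])
    fix x :: real assume "x \<in> {0<..<1}"
    then have x: "0 < x" "x < 1" by auto
    show "m * x / (1 + m * (1 - x)) \<le> g' x * (x - x powr a)"
      unfolding j_eq using ars_pt(1)[OF x m] .
  qed
  moreover have "ln (1 + m) \<le> (1 + m) / m * ln (1 + m)"
  proof -
    have "1 * ln (1 + m) \<le> ((1 + m) / m) * ln (1 + m)"
      using mp by (intro mult_right_mono) (auto simp: field_simps)
    then show ?thesis by simp
  qed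
  ultimately show "ln a - 1 \<le> a * K" unfolding aK la by linarith
qed

definition Kf :: "(real \<Rightarrow> real) \<Rightarrow> real \<Rightarrow> real" where
  "Kf g a = (LBINT x:{0<..<1}. x powr (a-1) * g x) - (1/a) * (LBINT x:{0<..<1}. g x)"

lemma sumS:
  assumes "prob_vec W P"
  shows "(\<Sum>w\<in>{w\<in>W. P w > 0}. P w) = 1"
proof -
  have "(\<Sum>w\<in>{w\<in>W. P w > 0}. P w) = (\<Sum>w\<in>W. P w)"
    using assms unfolding prob_vec_def
    by (intro sum.mono_neutral_left) (auto simp: order.strict_iff_not)
  then show ?thesis using assms unfolding prob_vec_def by simp
qed

lemma sumS_gen:
  assumes "prob_vec W P" "\<And>w. w \<in> W \<Longrightarrow> P w = 0 \<Longrightarrow> f w = 0"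
  shows "(\<Sum>w\<in>{w\<in>W. P w > 0}. f w) = (\<Sum>w\<in>W. f w)"
  using assms unfolding prob_vec_def
  by (intro sum.mono_neutral_left) (auto simp: order.strict_iff_not)

lemma prob_le1:
  assumes "prob_vec W P" "w \<in> W" shows "P w \<le> 1"
proof -
  have "P w \<le> (\<Sum>w\<in>W. P w)" using assms unfolding prob_vec_def
    by (intro member_le_sum) auto
  then show ?thesis using assms unfolding prob_vec_def by simp
qed

lemma diff_sum:
  assumes P: "prob_vec W P" and [measurable]: "g \<in> borel_measurable borel"
    and gi: "set_integrable lborel {0<..<1} g"
  shows "E1 W P g - E0 g = (\<Sum>w\<in>{w\<in>W. P w > 0}. Kf g (1 / P w))"
proof -
  have "E1 W P g = (\<Sum>w\<in>{w\<in>W. P w > 0}. LBINT x:{0<..<1}. x powr (1 / P w - 1) * g x)"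
    by (rule E1_eq[OF _ gi]) (use prob_le1[OF P] in auto)
  moreover have "E0 g = (\<Sum>w\<in>{w\<in>W. P w > 0}. P w) * (LBINT x:{0<..<1}. g x)"
    using E0_eq sumS[OF P] by simp
  ultimately show ?thesis
    unfolding Kf_def by (simp add: sum_subtractf sum_distrib_right)
qed

lemma h_ind_meas[measurable]: "h_ind d \<in> borel_measurable borel"
  unfolding h_ind_def by measurable

lemma ind_int: "set_integrable lborel {0<..<1} (h_ind d)"
  by (rule sint_bound[OF sint_const[of 1]]) (auto simp: h_ind_def)

lemma ind_val:
  fixes a d :: real
  assumes a: "1 \<le> a" and d: "0 < d" "d < 1"
  shows "(LBINT x:{0<..<1}. x powr (a-1) * h_ind d x) = (1 - d powr a) / a"
proof -
  have "(LBINT x:{0<..<1}. x powr (a-1) * h_ind d x) = (LBINT x:{d..<1}. x powr (a-1))"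
    unfolding set_lebesgue_integral_def
    by (rule arg_cong[where f="integral\<^sup>L lborel"]) (use d in \<open>auto simp: h_ind_def indicator_def\<close>)
  also have "\<dots> = (LBINT x:{d..1}. x powr (a-1))"
    by (rule set_integral_discrete_difference[where X="{1}"]) auto
  also have "\<dots> = (LBINT x=ereal d..ereal 1. x powr (a-1))"
    using d by (simp add: interval_integral_Icc)
  also have "\<dots> = 1 powr a / a - d powr a / a"
  proof (rule interval_integral_FTC_finite)
    show "continuous_on {min d 1..max d 1} (\<lambda>x. x powr (a - 1))"
      using d by (intro continuous_intros) auto
    fix x assume x: "min d 1 \<le> x" "x \<le> max d 1"
    then have x0: "0 < x" using d by simp
    have "((\<lambda>x. x powr a / a) has_real_derivative x powr (a - 1)) (at x)"
      using x0 a by (auto intro!: derivative_eq_intros)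
    then show "((\<lambda>x. x powr a / a) has_vector_derivative x powr (a - 1)) (at x within {min d 1..max d 1})"
      by (simp add: has_real_derivative_iff_has_vector_derivative has_vector_derivative_at_within)
  qed
  finally show ?thesis by (simp add: diff_divide_distrib)
qed

lemma ind_K:
  fixes a d :: real
  assumes a: "1 \<le> a" and d: "0 < d" "d < 1"
  shows "Kf (h_ind d) a = (d - d powr a) / a"
proof -
  have "(LBINT x:{0<..<1}. h_ind d x) = (LBINT x:{0<..<1}. x powr (1-1) * h_ind d x)"
    by (rule set_lebesgue_integral_cong) auto
  also have "\<dots> = 1 - d" using ind_val[of 1 d] d by simp
  finally have I1: "(LBINT x:{0<..<1}. h_ind d x) = 1 - d" .
  have a0: "a \<noteq> 0" using a by simp
  show ?thesis unfolding Kf_def ind_val[OF a d] I1 using a0 by (simp add: field_simps)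
qed

lemma h_log_meas[measurable]: "h_log \<in> borel_measurable borel"
  unfolding h_log_def by measurable

lemma log_K:
  fixes a :: real
  assumes a: "1 \<le> a"
  shows "Kf h_log a = (1 - 1/a) / a"
proof -
  have L2: "1 * (1 - 1/a) / a \<le> (LBINT x:{0<..<1}. x powr (a-1) * ln (\<Sum>i\<in>{0::nat}. x powr (1::real))) - (1/a) * (LBINT x:{0<..<1}. ln (\<Sum>i\<in>{0::nat}. x powr (1::real)))"
    by (rule lnpow(2)[of "{0::nat}" 1 "\<lambda>_. 1" 1 a]) (use a in auto)
  have L3: "(LBINT x:{0<..<1}. x powr (a-1) * ln (\<Sum>i\<in>{0::nat}. x powr (1::real))) - (1/a) * (LBINT x:{0<..<1}. ln (\<Sum>i\<in>{0::nat}. x powr (1::real))) \<le> 1 * (1 - 1/a) / a"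
    by (rule lnpow(3)[of "{0::nat}" 1 "\<lambda>_. 1" 1 a]) (use a in auto)
  have eq1: "(LBINT x:{0<..<1}. x powr (a-1) * ln (\<Sum>i\<in>{0::nat}. x powr (1::real))) = (LBINT x:{0<..<1}. x powr (a-1) * h_log x)"
    by (rule set_lebesgue_integral_cong) (auto simp: h_log_def)
  have eq2: "(LBINT x:{0<..<1}. ln (\<Sum>i\<in>{0::nat}. x powr (1::real))) = (LBINT x:{0<..<1}. h_log x)"
    by (rule set_lebesgue_integral_cong) (auto simp: h_log_def)
  show ?thesis using L2 L3 unfolding eq1 eq2 Kf_def mult_1 by linarith
qed

lemma log_int: "set_integrable lborel {0<..<1} h_log"
  using ln_int' unfolding h_log_def by simp

lemma h_opt_meas[measurable]: "h_opt D0 \<in> borel_measurable borel"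
  unfolding h_opt_def by measurable

lemma opt_K:
  fixes D0 :: real
  assumes D0: "0 < D0" "D0 < 1"
  shows "\<exists>emin Emax. 0 < emin \<and> 0 < Emax \<and> set_integrable lborel {0<..<1} (h_opt D0) \<and>
     (\<forall>a. 1 \<le> a \<longrightarrow> emin * (1 - 1/a) / a \<le> Kf (h_opt D0) a \<and> Kf (h_opt D0) a \<le> Emax * (1 - 1/a) / a)"
proof -
  define q where "q = 1 - D0"
  have q: "0 < q" "q < 1" using D0 unfolding q_def by auto
  define k where "k = nat \<lfloor>1 / q\<rfloor>"
  have kq: "real k \<le> 1 / q" "1 / q < real k + 1"
  proof -
    have "1 < 1 / q" using q by simp
    then have f: "0 \<le> \<lfloor>1 / q\<rfloor>" using q by simp
    show "real k \<le> 1 / q" unfolding k_def using f by simp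
    show "1 / q < real k + 1" unfolding k_def using f by linarith
  qed
  have k1: "1 \<le> k"
  proof -
    have "1 < 1 / q" using q by simp
    then have "1 \<le> \<lfloor>1 / q\<rfloor>" by (simp only: le_floor_iff)
    then show ?thesis unfolding k_def using nat_mono[of 1 "\<lfloor>1 / q\<rfloor>"] by simp
  qed
  have Pst: "Pstar D0 i = (if i < k then q else if i = k then 1 - q * real k else 0)" for i
    unfolding Pstar_def k_def q_def Let_def by simp
  define T where "T = {w\<in>{0..k}. Pstar D0 w > 0}"
  define e where "e w = 1 / Pstar D0 w - 1" for w
  define emin where "emin = 1 / q - 1"
  define Emax where "Emax = (\<Sum>i\<in>T. e i)"
  have Tfin: "finite T" unfolding T_def by simp
  have T0: "0 \<in> T" unfolding T_def using k1 q by (simp add: Pst)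
  have Tne: "T \<noteq> {}" using T0 by auto
  have Pq: "0 < Pstar D0 i \<and> Pstar D0 i \<le> q" if "i \<in> T" for i
  proof -
    have "q * (real k + 1) > 1" using kq(2) q by (simp add: field_simps)
    then have "1 - q * real k \<le> q" by (simp add: algebra_simps)
    then show ?thesis using that unfolding T_def by (auto simp: Pst split: if_splits)
  qed
  have emin0: "0 < emin" unfolding emin_def using q by simp
  have emin_le: "emin \<le> e i" if "i \<in> T" for i
  proof -
    have "1 / q \<le> 1 / Pstar D0 i" using Pq[OF that] by (intro divide_left_mono) auto
    then show ?thesis unfolding emin_def e_def by simp
  qed
  have e0: "0 \<le> e i" if "i \<in> T" for i using emin_le[OF that] emin0 by simp
  have Emax_ge: "e i \<le> Emax" if "i \<in> T" for i
    unfolding Emax_def using Tfin e0 that by (intro member_le_sum) auto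
  have Emax0: "0 < Emax" using Emax_ge[OF T0] emin_le[OF T0] emin0 by simp
  have hopt: "h_opt D0 = (\<lambda>x. ln (\<Sum>i\<in>T. x powr e i))"
    unfolding h_opt_def f1_def T_def e_def k_def q_def ..
  have int: "set_integrable lborel {0<..<1} (h_opt D0)"
    unfolding hopt by (rule lnpow(1)[OF Tfin Tne emin0 emin_le Emax_ge order_refl])
  have bnds: "emin * (1 - 1/a) / a \<le> Kf (h_opt D0) a \<and> Kf (h_opt D0) a \<le> Emax * (1 - 1/a) / a"
    if a: "1 \<le> a" for a
    unfolding Kf_def hopt
    using lnpow(2,3)[OF Tfin Tne emin0 emin_le Emax_ge a] by simp
  show ?thesis using emin0 Emax0 int bnds by blast
qed

abbreviation "cc \<equiv> exp (-2::real)"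

lemma cc_bounds: "0 < cc" "cc \<le> 1/2" "cc < 1"
proof -
  show "0 < cc" by simp
  have "1 + 2 \<le> exp (2::real)" using exp_ge_add_one_self[of 2] by simp
  then have "2 \<le> exp (2::real)" by simp
  then show "cc \<le> 1/2" by (simp add: exp_minus field_simps)
  then show "cc < 1" by simp
qed

lemma pv_basic:
  assumes P: "prob_vec W P" and D: "Delta W P \<le> cc"
  obtains w0 where "w0 \<in> W" "P w0 = 1 - Delta W P" "\<And>w. w \<in> W \<Longrightarrow> w \<noteq> w0 \<Longrightarrow> P w \<le> Delta W P"
    "0 \<le> Delta W P" "\<And>w. w \<in> W \<Longrightarrow> P w \<le> P w0" "1/2 \<le> P w0"
proof -
  have fin: "finite W" "W \<noteq> {}" using P unfolding prob_vec_def by auto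
  define M where "M = Max (P ` W)"
  have "M \<in> P ` W" unfolding M_def using fin by simp
  then obtain w0 where w0: "w0 \<in> W" "P w0 = M" by auto
  have Dd: "Delta W P = 1 - M" unfolding Delta_def M_def ..
  have ge: "P w \<le> P w0" if "w \<in> W" for w unfolding w0(2) M_def using fin that by simp
  have oth: "P w \<le> Delta W P" if "w \<in> W" "w \<noteq> w0" for w
  proof -
    have "(\<Sum>v\<in>{w, w0}. P v) \<le> (\<Sum>v\<in>W. P v)"
      using P that w0 unfolding prob_vec_def by (intro sum_mono2) auto
    then show ?thesis using P that unfolding prob_vec_def Dd w0(2)[symmetric] by simp
  qed
  have "P w0 \<le> 1" using prob_le1[OF P w0(1)] .
  then have "0 \<le> Delta W P" unfolding Dd w0(2) by simp
  moreover have "1/2 \<le> P w0" using D cc_bounds(2) unfolding Dd w0(2) by simp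
  ultimately show ?thesis using that[OF w0(1) _ oth _ ge] Dd w0(2) by simp
qed

lemma sq_bounds:
  assumes P: "prob_vec W P" and w0: "w0 \<in> W" "P w0 = 1 - Delta W P" "\<And>w. w \<in> W \<Longrightarrow> P w \<le> P w0"
    and D0: "0 \<le> Delta W P"
  shows "Delta W P \<le> 1 - (\<Sum>w\<in>W. (P w)\<^sup>2)" "1 - (\<Sum>w\<in>W. (P w)\<^sup>2) \<le> 2 * Delta W P"
proof -
  have fin: "finite W" using P unfolding prob_vec_def by auto
  have "(\<Sum>w\<in>W. (P w)\<^sup>2) \<le> (\<Sum>w\<in>W. P w0 * P w)"
    using P w0(3) unfolding prob_vec_def power2_eq_square by (intro sum_mono mult_right_mono) auto
  also have "\<dots> = P w0" using P unfolding prob_vec_def by (simp add: sum_distrib_left[symmetric])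
  finally show "Delta W P \<le> 1 - (\<Sum>w\<in>W. (P w)\<^sup>2)" using w0(2) by simp
  have "(P w0)\<^sup>2 \<le> (\<Sum>w\<in>W. (P w)\<^sup>2)" using fin w0(1) by (intro member_le_sum) auto
  moreover have "1 - (P w0)\<^sup>2 \<le> 2 * Delta W P" unfolding w0(2) using D0
    by (simp add: power2_eq_square algebra_simps)
  ultimately show "1 - (\<Sum>w\<in>W. (P w)\<^sup>2) \<le> 2 * Delta W P" by simp
qed

lemma sumPP:
  assumes P: "prob_vec W P"
  shows "(\<Sum>w\<in>{w\<in>W. P w > 0}. P w * (1 - P w)) = 1 - (\<Sum>w\<in>W. (P w)\<^sup>2)"
proof -
  have "(\<Sum>w\<in>{w\<in>W. P w > 0}. P w * (1 - P w)) = (\<Sum>w\<in>{w\<in>W. P w > 0}. P w) - (\<Sum>w\<in>{w\<in>W. P w > 0}. (P w)\<^sup>2)"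
    by (simp add: algebra_simps power2_eq_square sum_subtractf)
  also have "(\<Sum>w\<in>{w\<in>W. P w > 0}. (P w)\<^sup>2) = (\<Sum>w\<in>W. (P w)\<^sup>2)"
    by (rule sumS_gen[OF P]) simp
  finally show ?thesis using sumS[OF P] by simp
qed

lemma part2:
  assumes P: "prob_vec W P" and D: "Delta W P \<le> cc"
  shows "E1 W P h_log - E0 h_log = 1 - (\<Sum>w\<in>W. (P w)\<^sup>2) \<and>
          1 * Delta W P \<le> 1 - (\<Sum>w\<in>W. (P w)\<^sup>2) \<and>
          1 - (\<Sum>w\<in>W. (P w)\<^sup>2) \<le> 2 * Delta W P"
proof -
  obtain w0 where w0: "w0 \<in> W" "P w0 = 1 - Delta W P" "\<And>w. w \<in> W \<Longrightarrow> w \<noteq> w0 \<Longrightarrow> P w \<le> Delta W P"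
    "0 \<le> Delta W P" "\<And>w. w \<in> W \<Longrightarrow> P w \<le> P w0" "1/2 \<le> P w0"
    using pv_basic[OF P D] by blast
  have "E1 W P h_log - E0 h_log = (\<Sum>w\<in>{w\<in>W. P w > 0}. Kf h_log (1 / P w))"
    by (rule diff_sum[OF P h_log_meas log_int])
  also have "\<dots> = (\<Sum>w\<in>{w\<in>W. P w > 0}. P w * (1 - P w))"
  proof (rule sum.cong)
    fix w assume "w \<in> {w\<in>W. P w > 0}"
    then have "0 < P w" "P w \<le> 1" using prob_le1[OF P] by auto
    then show "Kf h_log (1 / P w) = P w * (1 - P w)" by (subst log_K) (auto simp: field_simps)
  qed simp
  also have "\<dots> = 1 - (\<Sum>w\<in>W. (P w)\<^sup>2)" by (rule sumPP[OF P])
  finally show ?thesis using sq_bounds[OF P w0(1,2,5,4)] by simp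
qed

lemma split_S:
  assumes P: "prob_vec W P" and w0: "w0 \<in> W" "0 < P w0"
  shows "(\<Sum>w\<in>{w\<in>W. P w > 0}. f w) = f w0 + (\<Sum>w\<in>{w\<in>W. P w > 0} - {w0}. f w)"
proof -
  have "finite {w\<in>W. P w > 0}" using P unfolding prob_vec_def by auto
  moreover have "w0 \<in> {w\<in>W. P w > 0}" using w0 by auto
  ultimately show ?thesis by (rule sum.remove)
qed

lemma part3:
  assumes P: "prob_vec W P" and D: "Delta W P \<le> cc" and d: "0 < d" "d < 1"
  shows "E1 W P (h_ind d) - E0 (h_ind d) = d - F1 W P d \<and>
            (d - d powr (1 / cc)) * Delta W P \<le> d - F1 W P d \<and>
            d - F1 W P d \<le> 3 * Delta W P"
proof -
  obtain w0 where w0: "w0 \<in> W" "P w0 = 1 - Delta W P" "\<And>w. w \<in> W \<Longrightarrow> w \<noteq> w0 \<Longrightarrow> P w \<le> Delta W P"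
    "0 \<le> Delta W P" "\<And>w. w \<in> W \<Longrightarrow> P w \<le> P w0" "1/2 \<le> P w0"
    using pv_basic[OF P D] by blast
  define S where "S = {w\<in>W. P w > 0}"
  define t where "t w = P w * (d - d powr (1 / P w))" for w
  have "E1 W P (h_ind d) - E0 (h_ind d) = (\<Sum>w\<in>S. Kf (h_ind d) (1 / P w))"
    unfolding S_def by (rule diff_sum[OF P h_ind_meas ind_int])
  also have "\<dots> = (\<Sum>w\<in>S. t w)"
  proof (rule sum.cong)
    fix w assume "w \<in> S"
    then have "0 < P w" "P w \<le> 1" using prob_le1[OF P] unfolding S_def by auto
    then show "Kf (h_ind d) (1 / P w) = t w" unfolding t_def by (subst ind_K) (use d in auto)
  qed simp
  finally have E: "E1 W P (h_ind d) - E0 (h_ind d) = (\<Sum>w\<in>S. t w)" .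
  have F: "(\<Sum>w\<in>S. t w) = d - F1 W P d"
  proof -
    have "(\<Sum>w\<in>S. t w) = d * (\<Sum>w\<in>S. P w) - (\<Sum>w\<in>S. P w * d powr (1 / P w))"
      unfolding t_def by (simp add: algebra_simps sum_subtractf sum_distrib_left)
    also have "(\<Sum>w\<in>S. P w * d powr (1 / P w)) = F1 W P d"
      unfolding S_def F1_def by (rule sumS_gen[OF P]) simp
    finally show ?thesis using sumS[OF P] unfolding S_def by simp
  qed
  have tnn: "0 \<le> t w" if "w \<in> S" for w
  proof -
    have p: "0 < P w" "P w \<le> 1" using that prob_le1[OF P] unfolding S_def by auto
    have "d powr (1 / P w) \<le> d powr 1" using p d by (intro powr_mono') (auto simp: field_simps)
    then show ?thesis unfolding t_def using p d by simp
  qed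
  have M0: "0 < P w0" using w0(6) by simp
  have spl: "(\<Sum>w\<in>S. f w) = f w0 + (\<Sum>w\<in>S - {w0}. f w)" for f
    unfolding S_def by (rule split_S[OF P w0(1) M0])
  have sumS': "(\<Sum>w\<in>S - {w0}. P w) = Delta W P"
    using spl[of P] sumS[OF P] w0(2) unfolding S_def by simp
  have S'P: "0 < P w \<and> P w \<le> Delta W P" if "w \<in> S - {w0}" for w
    using that w0(3) unfolding S_def by auto
  have cc0: "0 < cc" using cc_bounds by simp
  show ?thesis
  proof (intro conjI)
    show "E1 W P (h_ind d) - E0 (h_ind d) = d - F1 W P d" using E F by simp
    have "(d - d powr (1 / cc)) * Delta W P = (\<Sum>w\<in>S - {w0}. P w * (d - d powr (1 / cc)))"
      unfolding sumS'[symmetric] by (simp add: sum_distrib_right mult.commute)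
    also have "\<dots> \<le> (\<Sum>w\<in>S - {w0}. t w)"
    proof (rule sum_mono)
      fix w assume w: "w \<in> S - {w0}"
      have p: "0 < P w" "P w \<le> cc" using S'P[OF w] D by auto
      have "1 / cc \<le> 1 / P w" using p by (intro divide_left_mono) auto
      then have "d powr (1 / P w) \<le> d powr (1 / cc)" using d by (intro powr_mono') auto
      then show "P w * (d - d powr (1 / cc)) \<le> t w" unfolding t_def using p
        by (intro mult_left_mono) auto
    qed
    also have "\<dots> \<le> (\<Sum>w\<in>S. t w)" using spl[of t] tnn w0(1) M0 unfolding S_def by simp
    finally show "(d - d powr (1 / cc)) * Delta W P \<le> d - F1 W P d" using F by simp
    have tw0: "t w0 \<le> 2 * Delta W P"
    proof -
      define m where "m = 1 / P w0 - 1"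
      have m0: "0 \<le> m" using prob_le1[OF P w0(1)] M0 unfolding m_def by (simp add: field_simps)
      have "t w0 \<le> d - d powr (1 / P w0)"
      proof -
        have "d powr (1 / P w0) \<le> d powr 1" using M0 prob_le1[OF P w0(1)] d
          by (intro powr_mono') (auto simp: field_simps)
        then show ?thesis unfolding t_def using prob_le1[OF P w0(1)] d M0
          by (intro mult_left_le_one_le) auto
      qed
      also have "\<dots> \<le> m * (1 - d)" using bern(1)[OF d m0] unfolding m_def by simp
      also have "\<dots> \<le> m" using m0 d by (simp add: mult_left_le)
      also have "m = Delta W P / P w0" unfolding m_def w0(2) using M0 w0(2)
        by (simp add: field_simps)
      also have "\<dots> \<le> Delta W P / (1/2)" using w0(4,6) by (intro divide_left_mono) auto
      finally show ?thesis by simp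
    qed
    have "(\<Sum>w\<in>S - {w0}. t w) \<le> (\<Sum>w\<in>S - {w0}. P w)"
    proof (rule sum_mono)
      fix w assume w: "w \<in> S - {w0}"
      have "d - d powr (1 / P w) \<le> 1" using d powr_ge_zero[of d "1 / P w"] by linarith
      then show "t w \<le> P w" unfolding t_def using S'P[OF w]
        by (intro mult_left_le) auto
    qed
    then show "d - F1 W P d \<le> 3 * Delta W P"
      using spl[of t] tw0 sumS' F by simp
  qed
qed

lemma part4:
  fixes D0 :: real
  assumes D0: "0 < D0" "D0 < 1"
  shows "\<exists>C1 C2 :: real. 0 < C1 \<and> 0 < C2 \<and>
         (\<forall>W P. prob_vec W P \<and> Delta W P \<le> cc \<longrightarrow>
            C1 * Delta W P \<le> E1 W P (h_opt D0) - E0 (h_opt D0) \<and>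
            E1 W P (h_opt D0) - E0 (h_opt D0) \<le> C2 * Delta W P)"
proof -
  obtain emin Emax where e: "0 < emin" "0 < Emax" and int: "set_integrable lborel {0<..<1} (h_opt D0)"
    and b: "\<And>a. 1 \<le> a \<Longrightarrow> emin * (1 - 1/a) / a \<le> Kf (h_opt D0) a \<and> Kf (h_opt D0) a \<le> Emax * (1 - 1/a) / a"
    using opt_K[OF D0] by blast
  show ?thesis
  proof (intro exI conjI allI impI)
    show "0 < emin" "0 < 2 * Emax" using e by auto
    fix W P assume WP: "prob_vec W P \<and> Delta W P \<le> cc"
    then have P: "prob_vec W P" and D: "Delta W P \<le> cc" by auto
    obtain w0 where w0: "w0 \<in> W" "P w0 = 1 - Delta W P" "\<And>w. w \<in> W \<Longrightarrow> w \<noteq> w0 \<Longrightarrow> P w \<le> Delta W P"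
      "0 \<le> Delta W P" "\<And>w. w \<in> W \<Longrightarrow> P w \<le> P w0" "1/2 \<le> P w0"
      using pv_basic[OF P D] by blast
    note sq = sq_bounds[OF P w0(1,2,5,4)]
    define S where "S = {w\<in>W. P w > 0}"
    have E: "E1 W P (h_opt D0) - E0 (h_opt D0) = (\<Sum>w\<in>S. Kf (h_opt D0) (1 / P w))"
      unfolding S_def by (rule diff_sum[OF P h_opt_meas int])
    have kb: "emin * (P w * (1 - P w)) \<le> Kf (h_opt D0) (1 / P w) \<and> Kf (h_opt D0) (1 / P w) \<le> Emax * (P w * (1 - P w))"
      if "w \<in> S" for w
    proof -
      have p: "0 < P w" "P w \<le> 1" using that prob_le1[OF P] unfolding S_def by auto
      then have "1 \<le> 1 / P w" by (simp add: field_simps)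
      from b[OF this] p show ?thesis by (simp add: field_simps)
    qed
    have "emin * (1 - (\<Sum>w\<in>W. (P w)\<^sup>2)) = (\<Sum>w\<in>S. emin * (P w * (1 - P w)))"
      unfolding S_def sumPP[OF P, symmetric] by (simp add: sum_distrib_left)
    also have "\<dots> \<le> (\<Sum>w\<in>S. Kf (h_opt D0) (1 / P w))" using kb by (intro sum_mono) auto
    finally have l: "emin * (1 - (\<Sum>w\<in>W. (P w)\<^sup>2)) \<le> E1 W P (h_opt D0) - E0 (h_opt D0)" using E by simp
    have "(\<Sum>w\<in>S. Kf (h_opt D0) (1 / P w)) \<le> (\<Sum>w\<in>S. Emax * (P w * (1 - P w)))" using kb by (intro sum_mono) auto
    also have "\<dots> = Emax * (1 - (\<Sum>w\<in>W. (P w)\<^sup>2))"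
      unfolding S_def sumPP[OF P, symmetric] by (simp add: sum_distrib_left)
    finally have u: "E1 W P (h_opt D0) - E0 (h_opt D0) \<le> Emax * (1 - (\<Sum>w\<in>W. (P w)\<^sup>2))" using E by simp
    have "emin * Delta W P \<le> emin * (1 - (\<Sum>w\<in>W. (P w)\<^sup>2))" using sq(1) e by (intro mult_left_mono) auto
    then show "emin * Delta W P \<le> E1 W P (h_opt D0) - E0 (h_opt D0)" using l by linarith
    have "Emax * (1 - (\<Sum>w\<in>W. (P w)\<^sup>2)) \<le> Emax * (2 * Delta W P)" using sq(2) e by (intro mult_left_mono) auto
    then show "E1 W P (h_opt D0) - E0 (h_opt D0) \<le> 2 * Emax * Delta W P" using u by simp
  qed
qed

lemma part1:
  fixes n :: nat
  shows "\<exists>C1 C2 C3 C4 :: real. 0 < C1 \<and> 0 < C2 \<and> 0 < C3 \<and> 0 < C4 \<and>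
       (\<forall>W P. prob_vec W P \<and> card W = n \<and> Delta W P \<le> cc \<longrightarrow>
          C1 * Ent W P \<le> E1 W P h_ars - E0 h_ars \<and>
          E1 W P h_ars - E0 h_ars \<le> C2 * Ent W P \<and>
          C3 * (Delta W P * ln (1 / Delta W P)) \<le> Ent W P \<and>
          Ent W P \<le> C4 * (Delta W P * ln (1 / Delta W P)))"
proof -
  have lnn: "0 \<le> ln (real n)" by (cases n) auto
  show ?thesis
  proof (intro exI conjI allI impI)
    show "(0::real) < 1/3" "(0::real) < 2" "(0::real) < 1" "0 < 3/2 + ln (real n) / 2" using lnn by auto
    fix W P assume WP: "prob_vec W P \<and> card W = n \<and> Delta W P \<le> cc"
    then have P: "prob_vec W P" and cardW: "card W = n" and D: "Delta W P \<le> cc" by auto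
    obtain w0 where w0: "w0 \<in> W" "P w0 = 1 - Delta W P" "\<And>w. w \<in> W \<Longrightarrow> w \<noteq> w0 \<Longrightarrow> P w \<le> Delta W P"
      "0 \<le> Delta W P" "\<And>w. w \<in> W \<Longrightarrow> P w \<le> P w0" "1/2 \<le> P w0"
      using pv_basic[OF P D] by blast
    define \<Delta> where "\<Delta> = Delta W P"
    define S where "S = {w\<in>W. P w > 0}"
    define L where "L w = P w * ln (1 / P w)" for w
    define K where "K w = Kf h_ars (1 / P w)" for w
    have M0: "0 < P w0" using w0(6) by simp
    have M1: "P w0 \<le> 1" using prob_le1[OF P w0(1)] .
    have spl: "(\<Sum>w\<in>S. f w) = f w0 + (\<Sum>w\<in>S - {w0}. f w)" for f
      unfolding S_def by (rule split_S[OF P w0(1) M0])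
    have sumS': "(\<Sum>w\<in>S - {w0}. P w) = \<Delta>"
      using spl[of P] sumS[OF P] w0(2) unfolding S_def \<Delta>_def by simp
    have S'P: "0 < P w \<and> P w \<le> \<Delta>" if "w \<in> S - {w0}" for w
      using that w0(3) unfolding S_def \<Delta>_def by auto
    have finS: "finite (S - {w0})" using P unfolding S_def prob_vec_def by auto
    have Ent: "Ent W P = (\<Sum>w\<in>S. L w)"
    proof -
      have "(\<Sum>w\<in>S. L w) = (\<Sum>w\<in>W. L w)" unfolding S_def by (rule sumS_gen[OF P]) (simp add: L_def)
      also have "\<dots> = Ent W P" unfolding Ent_def L_def sum_negf[symmetric]
        by (rule sum.cong) (auto simp: ln_div)
      finally show ?thesis by simp
    qed
    have Lnn: "0 \<le> L w" if "w \<in> S" for w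
    proof -
      have "0 < P w" "P w \<le> 1" using that prob_le1[OF P] unfolding S_def by auto
      then have "0 \<le> ln (1 / P w)" by simp
      then show ?thesis unfolding L_def using \<open>0 < P w\<close> by simp
    qed
    have Lw0: "L w0 \<le> \<Delta>"
    proof -
      have "ln (1 / P w0) \<le> 1 / P w0 - 1" using M0 by (intro ln_le_minus_one) auto
      then have "P w0 * ln (1 / P w0) \<le> P w0 * (1 / P w0 - 1)" using M0 by (intro mult_left_mono) auto
      moreover have "P w0 * (1 / P w0 - 1) = 1 - P w0" using M0 by (simp add: field_simps)
      ultimately show ?thesis unfolding L_def \<Delta>_def using w0(2) by linarith
    qed
    define Oth where "Oth = (\<Sum>w\<in>S - {w0}. L w)"
    have EntO: "Ent W P = L w0 + Oth" unfolding Ent Oth_def using spl .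
    have O0: "0 \<le> Oth" unfolding Oth_def using Lnn by (intro sum_nonneg) auto
    have Olow: "\<Delta> * ln (1 / \<Delta>) \<le> Oth"
    proof -
      have "\<Delta> * ln (1 / \<Delta>) = (\<Sum>w\<in>S - {w0}. P w * ln (1 / \<Delta>))"
        unfolding sumS'[symmetric] by (simp add: sum_distrib_right)
      also have "\<dots> \<le> Oth" unfolding Oth_def L_def
      proof (rule sum_mono)
        fix w assume w: "w \<in> S - {w0}"
        have p: "0 < P w" "P w \<le> \<Delta>" using S'P[OF w] by auto
        have "ln (1 / \<Delta>) \<le> ln (1 / P w)" using p by (simp add: ln_div)
        then show "P w * ln (1 / \<Delta>) \<le> P w * ln (1 / P w)" using p by (intro mult_left_mono) auto
      qed
      finally show ?thesis .
    qed
    have two: "2 * \<Delta> \<le> \<Delta> * ln (1 / \<Delta>)"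
    proof (cases "\<Delta> = 0")
      case True then show ?thesis by simp
    next
      case False
      then have Dp: "0 < \<Delta>" using w0(4) unfolding \<Delta>_def by simp
      have "ln \<Delta> \<le> ln cc" using Dp D unfolding \<Delta>_def by (subst ln_le_cancel_iff) auto
      then have "2 \<le> ln (1 / \<Delta>)" using Dp by (simp add: ln_div)
      then show ?thesis using Dp by simp
    qed
    have Oup: "Oth \<le> \<Delta> * ln (1 / \<Delta>) + \<Delta> * ln (real n)"
    proof (cases "\<Delta> = 0")
      case True
      then have e: "S - {w0} = {}" using S'P by force
      show ?thesis unfolding Oth_def e using True by simp
    next
      case False
      then have Dp: "0 < \<Delta>" using w0(4) unfolding \<Delta>_def by simp
      have n0: "0 < n" using P cardW unfolding prob_vec_def by auto
      have cS: "card (S - {w0}) \<le> n" unfolding cardW[symmetric] S_def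
        using P unfolding prob_vec_def by (intro card_mono) auto
      have per: "L w \<le> P w * (ln (1 / \<Delta>) + ln (real n)) + \<Delta> / real n - P w" if w: "w \<in> S - {w0}" for w
      proof -
        have p: "0 < P w" using S'P[OF w] by auto
        define y where "y = \<Delta> / (real n * P w)"
        have y: "0 < y" unfolding y_def using Dp n0 p by simp
        have "ln y \<le> y - 1" using y by (rule ln_le_minus_one)
        moreover have "ln y = ln (1 / P w) - ln (1 / \<Delta>) - ln (real n)"
          unfolding y_def using Dp n0 p by (simp add: ln_div ln_mult)
        ultimately have "ln (1 / P w) \<le> ln (1 / \<Delta>) + ln (real n) + (y - 1)" by simp
        then have "P w * ln (1 / P w) \<le> P w * (ln (1 / \<Delta>) + ln (real n) + (y - 1))"
          using p by (intro mult_left_mono) auto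
        moreover have "P w * y = \<Delta> / real n" unfolding y_def using p by simp
        ultimately show ?thesis unfolding L_def by (simp add: algebra_simps)
      qed
      have "Oth \<le> (\<Sum>w\<in>S - {w0}. P w * (ln (1 / \<Delta>) + ln (real n)) + \<Delta> / real n - P w)"
        unfolding Oth_def using per by (intro sum_mono) auto
      also have "\<dots> = \<Delta> * (ln (1 / \<Delta>) + ln (real n)) + real (card (S - {w0})) * (\<Delta> / real n) - \<Delta>"
        by (simp add: sum.distrib sum_subtractf sum_distrib_right[symmetric] sumS')
      also have "real (card (S - {w0})) * (\<Delta> / real n) \<le> real n * (\<Delta> / real n)"
        using cS Dp n0 by (intro mult_right_mono) auto
      finally show ?thesis using n0 by (simp add: algebra_simps)
    qed
    have Kb: "0 \<le> K w \<and> K w \<le> 2 * L w" if "w \<in> S" for w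
    proof -
      have p: "0 < P w" "P w \<le> 1" using that prob_le1[OF P] unfolding S_def by auto
      then have a: "1 \<le> 1 / P w" by (simp add: field_simps)
      have "0 \<le> K w" unfolding K_def Kf_def using ars_K(1)[OF a] .
      moreover have "(1 / P w) * K w \<le> 2 * ln (1 / P w)" unfolding K_def Kf_def using ars_K(2)[OF a] .
      then have "P w * ((1 / P w) * K w) \<le> P w * (2 * ln (1 / P w))" using p by (intro mult_left_mono) auto
      then have "K w \<le> 2 * L w" unfolding L_def using p by (simp add: algebra_simps)
      ultimately show ?thesis by simp
    qed
    have Kl: "L w - P w \<le> K w" if w: "w \<in> S - {w0}" for w
    proof -
      have p: "0 < P w" "P w \<le> cc" using S'P[OF w] D unfolding \<Delta>_def by auto
      have p1: "P w < 1" using p cc_bounds by simp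
      then have a: "1 < 1 / P w" using p by (simp add: field_simps)
      have "ln (1 / P w) - 1 \<le> (1 / P w) * K w" unfolding K_def Kf_def using ars_K(3)[OF _ a] a by simp
      then have "P w * (ln (1 / P w) - 1) \<le> P w * ((1 / P w) * K w)" using p by (intro mult_left_mono) auto
      then show ?thesis unfolding L_def using p by (simp add: algebra_simps)
    qed
    have E: "E1 W P h_ars - E0 h_ars = (\<Sum>w\<in>S. K w)"
      unfolding S_def K_def by (rule diff_sum[OF P h_ars_meas ars_int])
    show "1 / 3 * Ent W P \<le> E1 W P h_ars - E0 h_ars"
    proof -
      have "Oth - \<Delta> = (\<Sum>w\<in>S - {w0}. L w - P w)" unfolding Oth_def sumS'[symmetric] by (simp add: sum_subtractf)
      also have "\<dots> \<le> (\<Sum>w\<in>S - {w0}. K w)" using Kl by (intro sum_mono) auto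
      also have "\<dots> \<le> (\<Sum>w\<in>S. K w)" using spl[of K] Kb[of w0] w0(1) M0 unfolding S_def by simp
      finally have "Oth - \<Delta> \<le> E1 W P h_ars - E0 h_ars" using E by simp
      moreover have "2 * \<Delta> \<le> Oth" using two Olow by linarith
      ultimately show ?thesis using EntO Lw0 by linarith
    qed
    show "E1 W P h_ars - E0 h_ars \<le> 2 * Ent W P"
      unfolding E Ent sum_distrib_left using Kb by (intro sum_mono) auto
    show "1 * (Delta W P * ln (1 / Delta W P)) \<le> Ent W P"
      using Olow EntO Lnn[of w0] w0(1) M0 unfolding \<Delta>_def S_def by simp
    show "Ent W P \<le> (3 / 2 + ln (real n) / 2) * (Delta W P * ln (1 / Delta W P))"
    proof -
      have "\<Delta> * ln (real n) \<le> (\<Delta> * ln (1 / \<Delta>) / 2) * ln (real n)"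
        using two lnn by (intro mult_right_mono) auto
      then show ?thesis using EntO Lw0 Oup two unfolding \<Delta>_def[symmetric]
        by (simp add: algebra_simps)
    qed
  qed
qed

theorem propositionA2:
  shows "\<exists>c::real. 0 < c \<and> c < 1 \<and>
    (\<forall>n::nat. \<exists>C1 C2 C3 C4 :: real. 0 < C1 \<and> 0 < C2 \<and> 0 < C3 \<and> 0 < C4 \<and>
       (\<forall>W P. prob_vec W P \<and> card W = n \<and> Delta W P \<le> c \<longrightarrow>
          C1 * Ent W P \<le> E1 W P h_ars - E0 h_ars \<and>
          E1 W P h_ars - E0 h_ars \<le> C2 * Ent W P \<and>
          C3 * (Delta W P * ln (1 / Delta W P)) \<le> Ent W P \<and>
          Ent W P \<le> C4 * (Delta W P * ln (1 / Delta W P)))) \<and>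
    (\<exists>C1 C2 :: real. 0 < C1 \<and> 0 < C2 \<and>
       (\<forall>W P. prob_vec W P \<and> Delta W P \<le> c \<longrightarrow>
          E1 W P h_log - E0 h_log = 1 - (\<Sum>w\<in>W. (P w)\<^sup>2) \<and>
          C1 * Delta W P \<le> 1 - (\<Sum>w\<in>W. (P w)\<^sup>2) \<and>
          1 - (\<Sum>w\<in>W. (P w)\<^sup>2) \<le> C2 * Delta W P)) \<and>
    (\<forall>\<delta>::real. 0 < \<delta> \<and> \<delta> < 1 \<longrightarrow>
       (\<exists>C1 C2 :: real. 0 < C1 \<and> 0 < C2 \<and>
         (\<forall>W P. prob_vec W P \<and> Delta W P \<le> c \<longrightarrow>
            E1 W P (h_ind \<delta>) - E0 (h_ind \<delta>) = \<delta> - F1 W P \<delta> \<and>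
            C1 * Delta W P \<le> \<delta> - F1 W P \<delta> \<and>
            \<delta> - F1 W P \<delta> \<le> C2 * Delta W P))) \<and>
    (\<forall>D0::real. 0 < D0 \<and> D0 < 1 \<longrightarrow>
       (\<exists>C1 C2 :: real. 0 < C1 \<and> 0 < C2 \<and>
         (\<forall>W P. prob_vec W P \<and> Delta W P \<le> c \<longrightarrow>
            C1 * Delta W P \<le> E1 W P (h_opt D0) - E0 (h_opt D0) \<and>
            E1 W P (h_opt D0) - E0 (h_opt D0) \<le> C2 * Delta W P)))"
proof -
  have d3: "\<forall>\<delta>::real. 0 < \<delta> \<and> \<delta> < 1 \<longrightarrow>
       (\<exists>C1 C2 :: real. 0 < C1 \<and> 0 < C2 \<and>
         (\<forall>W P. prob_vec W P \<and> Delta W P \<le> cc \<longrightarrow>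
            E1 W P (h_ind \<delta>) - E0 (h_ind \<delta>) = \<delta> - F1 W P \<delta> \<and>
            C1 * Delta W P \<le> \<delta> - F1 W P \<delta> \<and>
            \<delta> - F1 W P \<delta> \<le> C2 * Delta W P))"
  proof (intro allI impI)
    fix d :: real assume d: "0 < d \<and> d < 1"
    have "1 < 1 / cc" using cc_bounds by (simp add: field_simps)
    then have "d powr (1 / cc) < d powr 1" using d by (intro powr_less_mono') auto
    then have pos: "0 < d - d powr (1 / cc)" using d by simp
    show "\<exists>C1 C2 :: real. 0 < C1 \<and> 0 < C2 \<and>
         (\<forall>W P. prob_vec W P \<and> Delta W P \<le> cc \<longrightarrow>
            E1 W P (h_ind d) - E0 (h_ind d) = d - F1 W P d \<and>
            C1 * Delta W P \<le> d - F1 W P d \<and>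
            d - F1 W P d \<le> C2 * Delta W P)"
      using pos part3 d by (intro exI[of _ "d - d powr (1 / cc)"] exI[of _ 3]) auto
  qed
  have d2: "\<exists>C1 C2 :: real. 0 < C1 \<and> 0 < C2 \<and>
       (\<forall>W P. prob_vec W P \<and> Delta W P \<le> cc \<longrightarrow>
          E1 W P h_log - E0 h_log = 1 - (\<Sum>w\<in>W. (P w)\<^sup>2) \<and>
          C1 * Delta W P \<le> 1 - (\<Sum>w\<in>W. (P w)\<^sup>2) \<and>
          1 - (\<Sum>w\<in>W. (P w)\<^sup>2) \<le> C2 * Delta W P)"
    using part2 by (intro exI[of _ 1] exI[of _ 2]) auto
  show ?thesis
    using cc_bounds part1 d2 d3 part4 by (intro exI[of _ cc]) auto
qed

end
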